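(* Let $x\in(0,1)$ and let $\mu^{(x)}$ be the joint distribution of $(\zeta(x),\zeta(1))$ as in the context. Let $z=(z_1,z_2)\in[0,2]^2$ have finite binary expansions $z_1=\sum_{k=1}^m\gamma_k2^{-(k-1)}$ and $z_2=\sum_{k=1}^n\gamma'_k2^{-(k-1)}$ with $\gamma_k,\gamma'_k\in\{0,1\}$, such that the word $\gamma_1\gamma_2\cdots\gamma_m$ is a substring of $\gamma'_1\gamma'_2\cdots\gamma'_n$. Then the local dimension $$\dim_{\mathrm{loc}}(\mu^{(x)},z):=\lim_{r\downarrow0}\frac{\log\mu^{(x)}(B_r(z))}{\log r}$$ exists and equals $2-\frac{\log(1+x)}{\log 2}$, where $B_r(z)$ is the closed Euclidean ball of radius $r$ centred at $z$.
   Context: Let $(Q_n)_{n\ge1}$ be i.i.d. random variables taking values $0$ and $1$ with probability $1/2$ each, and independently let $(U_n)_{n\ge1}$ be i.i.d. uniform on $[0,1]$. For $y\in(0,1]$ let $T_n(y)=\sum_{j=1}^n\mathbbm{1}_{\{U_j\le y\}}$ (with $T_0(y)=0$) and $$\zeta(y)=\sum_{n=1}^\infty(1/2)^{T_{n-1}(y)}Q_n\mathbbm{1}_{\{U_n\le y\}}.$$ In particular $\zeta(1)=\sum_{n\ge1}2^{-(n-1)}Q_n$; each $\zeta(y)$ is uniformly distributed on $[0,2]$. *)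

theory Defs
  imports "HOL-Probability.Probability"
begin

definition Tcount :: "(nat \<Rightarrow> real) \<Rightarrow> real \<Rightarrow> nat \<Rightarrow> nat" where
  "Tcount U y n = card {j \<in> {1..n}. U j \<le> y}"

text \<open>zeta(y) = sum over n \<ge> 1 of (1/2)^(T_(n-1)(y)) * Q_n * 1[U_n \<le> y];
  the summation index k corresponds to n = k + 1.\<close>
definition zeta :: "(nat \<Rightarrow> real) \<Rightarrow> (nat \<Rightarrow> real) \<Rightarrow> real \<Rightarrow> real" where
  "zeta Q U y = (\<Sum>k. (1/2) ^ (Tcount U y k) * Q (Suc k) * indicator {..y} (U (Suc k)))"

definition mu :: "'w measure \<Rightarrow> (nat \<Rightarrow> 'w \<Rightarrow> real) \<Rightarrow> (nat \<Rightarrow> 'w \<Rightarrow> real) \<Rightarrow> real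
    \<Rightarrow> (real \<times> real) measure" where
  "mu M Q U x = distr M borel
     (\<lambda>\<omega>. (zeta (\<lambda>n. Q n \<omega>) (\<lambda>n. U n \<omega>) x, zeta (\<lambda>n. Q n \<omega>) (\<lambda>n. U n \<omega>) 1))"

end

theory Submission
  imports Defs
begin

lemma Tcount_0[simp]: "Tcount U y 0 = 0"
  by (simp add: Tcount_def)

lemma Tcount_Suc: "Tcount U y (Suc k) = Tcount U y k + (if U (Suc k) \<le> y then 1 else 0)"
proof -
  have "{j \<in> {1..Suc k}. U j \<le> y} = {j \<in> {1..k}. U j \<le> y} \<union> (if U (Suc k) \<le> y then {Suc k} else {})"
    by (auto simp: le_Suc_eq)
  then show ?thesis unfolding Tcount_def by (simp add: card_insert_if)
qed

lemma Tcount_shift: "Tcount U y (Suc k) = (if U 1 \<le> y then 1 else 0) + Tcount (\<lambda>n. U (Suc n)) y k"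
  by (induction k) (simp_all add: Tcount_Suc)

lemma Tcount_cong: "(\<And>j. j \<ge> 1 \<Longrightarrow> U j = U' j) \<Longrightarrow> Tcount U y k = Tcount U' y k"
  unfolding Tcount_def by (intro arg_cong[where f=card]) auto

lemma zeta_cong: "(\<And>j. j \<ge> 1 \<Longrightarrow> Q j = Q' j) \<Longrightarrow> (\<And>j. j \<ge> 1 \<Longrightarrow> U j = U' j) \<Longrightarrow>
   zeta Q U y = zeta Q' U' y"
  unfolding zeta_def using Tcount_cong[of U U' y] by simp

lemma partial_bound:
  "(\<Sum>k<N. (1/2::real) ^ Tcount U y k * indicator {..y} (U (Suc k))) = 2 - 2 * (1/2) ^ Tcount U y N"
  by (induction N) (auto simp: Tcount_Suc indicator_def)

definition goodseq :: "(nat \<Rightarrow> real) \<Rightarrow> bool" where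
  "goodseq Q \<longleftrightarrow> (\<forall>n\<ge>1. Q n \<in> {0,1})"

lemma zeta_summable:
  assumes "goodseq Q"
  shows "summable (\<lambda>k. (1/2::real) ^ (Tcount U y k) * Q (Suc k) * indicator {..y} (U (Suc k)))"
proof -
  have nn: "0 \<le> (1/2::real) ^ (Tcount U y k) * Q (Suc k) * indicator {..y} (U (Suc k))" for k
    using assms[unfolded goodseq_def, rule_format, of "Suc k"] by (auto simp: indicator_def)
  have le: "(1/2::real) ^ (Tcount U y k) * Q (Suc k) * indicator {..y} (U (Suc k))
      \<le> (1/2::real) ^ (Tcount U y k) * indicator {..y} (U (Suc k))" for k
    using assms[unfolded goodseq_def, rule_format, of "Suc k"] by (auto simp: indicator_def)
  have "summable (\<lambda>k. (1/2::real) ^ (Tcount U y k) * indicator {..y} (U (Suc k)))"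
    by (rule summableI_nonneg_bounded[where x=2]) (auto simp: partial_bound)
  then show ?thesis
    by (rule summable_comparison_test'[where N=0]) (use nn le in auto)
qed

lemma zeta_bounds:
  assumes "goodseq Q"
  shows "0 \<le> zeta Q U y" "zeta Q U y \<le> 2"
proof -
  let ?f = "\<lambda>k. (1/2::real) ^ (Tcount U y k) * Q (Suc k) * indicator {..y} (U (Suc k))"
  have nn: "0 \<le> ?f k" for k
    using assms[unfolded goodseq_def, rule_format, of "Suc k"] by (auto simp: indicator_def)
  have le: "?f k \<le> (1/2::real) ^ (Tcount U y k) * indicator {..y} (U (Suc k))" for k
    using assms[unfolded goodseq_def, rule_format, of "Suc k"] by (auto simp: indicator_def)
  show "0 \<le> zeta Q U y" unfolding zeta_def using nn zeta_summable[OF assms]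
    by (simp add: suminf_nonneg)
  have ps: "sum ?f {..<N} \<le> 2" for N
  proof -
    have "sum ?f {..<N} \<le> (\<Sum>k<N. (1/2::real) ^ Tcount U y k * indicator {..y} (U (Suc k)))"
      by (intro sum_mono le)
    also have "\<dots> \<le> 2" by (simp add: partial_bound)
    finally show ?thesis .
  qed
  show "zeta Q U y \<le> 2" unfolding zeta_def
    using zeta_summable[OF assms] ps by (intro suminf_le_const) auto
qed

lemma zeta_shift:
  assumes "goodseq Q"
  shows "zeta Q U y = Q 1 * indicator {..y} (U 1)
     + (1/2) ^ (if U 1 \<le> y then 1 else 0) * zeta (\<lambda>n. Q (Suc n)) (\<lambda>n. U (Suc n)) y"
proof -
  let ?f = "\<lambda>k. (1/2::real) ^ (Tcount U y k) * Q (Suc k) * indicator {..y} (U (Suc k))"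
  let ?g = "\<lambda>k. (1/2::real) ^ (Tcount (\<lambda>n. U (Suc n)) y k) * Q (Suc (Suc k)) * indicator {..y} (U (Suc (Suc k)))"
  have gs: "goodseq (\<lambda>n. Q (Suc n))" using assms unfolding goodseq_def by auto
  have "suminf ?f = (\<Sum>k. ?f (Suc k)) + ?f 0"
    using suminf_split_head[OF zeta_summable[OF assms]] by simp
  moreover have "?f (Suc k) = (1/2) ^ (if U 1 \<le> y then 1 else 0) * ?g k" for k
    by (simp add: Tcount_shift power_add)
  moreover have "(\<Sum>k. (1/2::real) ^ (if U 1 \<le> y then 1 else 0) * ?g k) = (1/2) ^ (if U 1 \<le> y then 1 else 0) * suminf ?g"
    using zeta_summable[OF gs] by (intro suminf_mult)
  ultimately show ?thesis unfolding zeta_def by simp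
qed


lemma Tcount_sum: "Tcount U y k = (\<Sum>j\<in>{1..k}. if U j \<le> y then 1 else 0)"
  unfolding Tcount_def by (simp add: sum.If_cases Int_def conj_commute)

lemma zeta_measurable:
  assumes q: "\<And>n. n \<ge> 1 \<Longrightarrow> q n \<in> borel_measurable N"
    and u: "\<And>n. n \<ge> 1 \<Longrightarrow> u n \<in> borel_measurable N"
  shows "(\<lambda>\<omega>. zeta (\<lambda>n. q n \<omega>) (\<lambda>n. u n \<omega>) y) \<in> borel_measurable N"
proof -
  have T: "(\<lambda>\<omega>. (1/2::real) ^ Tcount (\<lambda>n. u n \<omega>) y k) \<in> borel_measurable N" for k
  proof -
    have "(\<lambda>\<omega>. (1/2::real) ^ Tcount (\<lambda>n. u n \<omega>) y k) = (\<lambda>\<omega>. \<Prod>j\<in>{1..k}. if u j \<omega> \<le> y then 1/2 else 1)"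
      by (auto simp: Tcount_sum power_sum intro!: prod.cong)
    also have "\<dots> \<in> borel_measurable N"
    proof (rule borel_measurable_prod)
      fix j assume "j \<in> {1..k}"
      then have [measurable]: "u j \<in> borel_measurable N" using u by auto
      show "(\<lambda>\<omega>. if u j \<omega> \<le> y then 1/2 else 1::real) \<in> borel_measurable N" by measurable
    qed
    finally show ?thesis .
  qed
  have [measurable]: "q (Suc k) \<in> borel_measurable N" "u (Suc k) \<in> borel_measurable N" for k
    using q u by auto
  show ?thesis unfolding zeta_def
    by (intro borel_measurable_suminf borel_measurable_times T) measurable
qed


definition Iset :: "(nat + nat) set" where "Iset = Inl ` {1..} \<union> Inr ` {1..}"
definition Xf :: "(nat \<Rightarrow> 'w \<Rightarrow> real) \<Rightarrow> (nat \<Rightarrow> 'w \<Rightarrow> real) \<Rightarrow> nat + nat \<Rightarrow> 'w \<Rightarrow> real" where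
  "Xf Q U i = (case i of Inl k \<Rightarrow> Q k | Inr k \<Rightarrow> U k)"
definition Zv :: "real \<Rightarrow> (nat \<Rightarrow> 'w \<Rightarrow> real) \<Rightarrow> (nat \<Rightarrow> 'w \<Rightarrow> real) \<Rightarrow> 'w \<Rightarrow> real \<times> real" where
  "Zv y Q U \<omega> = (zeta (\<lambda>n. Q n \<omega>) (\<lambda>n. U n \<omega>) y, zeta (\<lambda>n. Q n \<omega>) (\<lambda>n. U n \<omega>) 1)"
definition Phi :: "real \<Rightarrow> (nat + nat \<Rightarrow> real) \<Rightarrow> real \<times> real" where
  "Phi y f = (zeta (\<lambda>n. f (Inl n)) (\<lambda>n. f (Inr n)) y, zeta (\<lambda>n. f (Inl n)) (\<lambda>n. f (Inr n)) 1)"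
definition shI :: "nat + nat \<Rightarrow> nat + nat" where
  "shI i = (case i of Inl k \<Rightarrow> Inl (Suc k) | Inr k \<Rightarrow> Inr (Suc k))"

lemma (in prob_space) indep_sets_reindex:
  assumes "indep_sets F (h ` I)" "inj_on h I"
  shows "indep_sets (\<lambda>i. F (h i)) I"
proof -
  have F: "\<forall>i\<in>h`I. F i \<subseteq> events"
    and P: "\<forall>J\<subseteq>h`I. J\<noteq>{} \<longrightarrow> finite J \<longrightarrow> (\<forall>A\<in>Pi J F. prob (\<Inter>j\<in>J. A j) = (\<Prod>j\<in>J. prob (A j)))"
    using assms(1) unfolding indep_sets_def by auto
  show ?thesis unfolding indep_sets_def
  proof (intro conjI ballI allI impI)
    show "F (h i) \<subseteq> events" if "i \<in> I" for i using F that by auto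
  next
    fix J A assume J: "J \<subseteq> I" "J \<noteq> {}" "finite J" and A: "A \<in> Pi J (\<lambda>i. F (h i))"
    define g where "g = the_inv_into J h"
    have inj: "inj_on h J" using assms(2) J(1) inj_on_subset by blast
    have gh: "\<And>j. j\<in>J \<Longrightarrow> g (h j) = j" using the_inv_into_f_f[OF inj] g_def by auto
    have "(\<lambda>j. A (g j)) \<in> Pi (h`J) F" using A gh by auto
    then have "prob (\<Inter>j\<in>h`J. A (g j)) = (\<Prod>j\<in>h`J. prob (A (g j)))"
      using P J by (meson image_is_empty image_mono finite_imageI)
    moreover have "(\<Inter>j\<in>h`J. A (g j)) = (\<Inter>j\<in>J. A j)" using gh by (simp add: image_image)
    moreover have "(\<Prod>j\<in>h`J. prob (A (g j))) = (\<Prod>j\<in>J. prob (A j))"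
      using gh by (auto simp: prod.reindex[OF inj] intro!: prod.cong)
    ultimately show "prob (\<Inter>j\<in>J. A j) = (\<Prod>j\<in>J. prob (A j))" by simp
  qed
qed

lemma inj_shI: "inj shI"
  unfolding inj_def shI_def by (auto split: sum.splits)

lemma shI_Iset: "shI ` Iset \<subseteq> Iset"
  unfolding shI_def Iset_def by auto

lemma Xf_shift: "Xf (\<lambda>k. Q (Suc k)) (\<lambda>k. U (Suc k)) i = Xf Q U (shI i)"
  unfolding Xf_def shI_def by (auto split: sum.splits)

lemma (in prob_space) indep_shift:
  assumes "indep_vars (\<lambda>_. borel) (Xf Q U) Iset"
  shows "indep_vars (\<lambda>_. borel) (Xf (\<lambda>k. Q (Suc k)) (\<lambda>k. U (Suc k))) Iset"
proof -
  have "indep_vars (\<lambda>_. borel) (Xf Q U) (shI ` Iset)"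
    using indep_vars_subset[OF assms shI_Iset] .
  then have rv: "\<forall>i\<in>shI ` Iset. random_variable borel (Xf Q U i)"
    and isx: "indep_sets (\<lambda>i. {Xf Q U i -` A \<inter> space M |A. A \<in> sets borel}) (shI ` Iset)"
    unfolding indep_vars_def2 by auto
  have "indep_sets (\<lambda>i. {Xf Q U (shI i) -` A \<inter> space M |A. A \<in> sets borel}) Iset"
    using indep_sets_reindex[OF isx] inj_shI by (auto simp: inj_on_def inj_def)
  then show ?thesis unfolding indep_vars_def2 Xf_shift using rv by auto
qed

locale proc = prob_space M for M :: "'w measure" +
  fixes Q U :: "nat \<Rightarrow> 'w \<Rightarrow> real"
  assumes Qm: "\<And>k. k \<ge> 1 \<Longrightarrow> Q k \<in> borel_measurable M"
    and Um: "\<And>k. k \<ge> 1 \<Longrightarrow> U k \<in> borel_measurable M"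
    and ind: "indep_vars (\<lambda>_. borel) (Xf Q U) Iset"
    and Q0: "\<And>k. k \<ge> 1 \<Longrightarrow> measure M {\<omega> \<in> space M. Q k \<omega> = 0} = 1/2"
    and Q1: "\<And>k. k \<ge> 1 \<Longrightarrow> measure M {\<omega> \<in> space M. Q k \<omega> = 1} = 1/2"
    and Ud: "\<And>k. k \<ge> 1 \<Longrightarrow> distributed M lborel (U k) (\<lambda>t. indicator {0..1} t)"
begin

lemma proc_shift: "proc M (\<lambda>k. Q (Suc k)) (\<lambda>k. U (Suc k))"
  by unfold_locales (simp_all add: Qm Um Q0 Q1 Ud indep_shift[OF ind])

lemma Xrv: "i \<in> Iset \<Longrightarrow> random_variable borel (Xf Q U i)"
  unfolding Iset_def Xf_def using Qm Um by auto

lemma prob_Q: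
  assumes k: "k \<ge> 1" and A: "A \<in> sets borel"
  shows "prob (Q k -` A \<inter> space M) = (if 0 \<in> A then 1/2 else 0) + (if 1 \<in> A then 1/2 else 0)"
proof -
  note [measurable] = Qm[OF k]
  define E0 where "E0 = {\<omega> \<in> space M. Q k \<omega> = 0}"
  define E1 where "E1 = {\<omega> \<in> space M. Q k \<omega> = 1}"
  have ev: "E0 \<in> events" "E1 \<in> events" unfolding E0_def E1_def by measurable
  have d: "E0 \<inter> E1 = {}" unfolding E0_def E1_def by auto
  have "prob (E0 \<union> E1) = 1"
    using finite_measure_Union[OF ev d] Q0[OF k] Q1[OF k] unfolding E0_def E1_def by auto
  then have AE: "AE \<omega> in M. \<omega> \<in> E0 \<union> E1" by (rule AE_prob_1)
  define G where "G = (if 0 \<in> A then E0 else {}) \<union> (if 1 \<in> A then E1 else {})"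
  have "AE \<omega> in M. \<omega> \<in> Q k -` A \<inter> space M \<longleftrightarrow> \<omega> \<in> G"
    using AE by eventually_elim (auto simp: G_def E0_def E1_def)
  then have "prob (Q k -` A \<inter> space M) = prob G"
    by (rule measure_eq_AE) (auto simp: G_def intro: ev measurable_sets[OF Qm[OF k] A])
  also have "\<dots> = (if 0 \<in> A then 1/2 else 0) + (if 1 \<in> A then 1/2 else 0)"
  proof -
    show ?thesis unfolding G_def using finite_measure_Union[OF ev d] Q0[OF k] Q1[OF k]
      by (auto simp: E0_def[symmetric] E1_def[symmetric])
  qed
  finally show ?thesis .
qed

lemma distr_Q: "k \<ge> 1 \<Longrightarrow> distr M borel (Q k) = distr M borel (Q 1)"
  by (rule measure_eqI) (auto simp: emeasure_distr emeasure_eq_measure prob_Q Qm)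

lemma distr_U: "k \<ge> 1 \<Longrightarrow> distr M borel (U k) = density lborel (\<lambda>t. indicator {0..1} t)"
proof -
  assume k: "k \<ge> 1"
  have "distr M borel (U k) = distr M lborel (U k)" by (rule distr_cong) simp_all
  also have "\<dots> = density lborel (\<lambda>t. indicator {0..1} t)"
    using distributed_distr_eq_density[OF Ud[OF k]] .
  finally show ?thesis .
qed

lemma prob_U_le:
  assumes k: "k \<ge> 1" and t: "0 \<le> t" "t \<le> 1"
  shows "prob {\<omega> \<in> space M. U k \<omega> \<le> t} = t"
proof -
  note [measurable] = Um[OF k]
  have "prob {\<omega> \<in> space M. U k \<omega> \<le> t} = measure (distr M borel (U k)) {..t}"
    by (subst measure_distr) (auto intro!: arg_cong[where f=prob])
  also have "\<dots> = measure (density lborel (\<lambda>t. indicator {0..1} t)) {..t}"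
    using distr_U[OF k] by simp
  also have "emeasure (density lborel (\<lambda>t. indicator {0..1} t :: ennreal)) {..t} = emeasure lborel {0..t}"
  proof -
    have "emeasure (density lborel (\<lambda>t. indicator {0..1} t :: ennreal)) {..t}
        = (\<integral>\<^sup>+ s. indicator {0..1} s * indicator {..t} s \<partial>lborel)"
      by (rule emeasure_density) auto
    also have "\<dots> = (\<integral>\<^sup>+ s. indicator {0..t} s \<partial>lborel)"
      using t by (intro nn_integral_cong) (auto simp: indicator_def)
    finally show ?thesis by simp
  qed
  then have "measure (density lborel (\<lambda>t. indicator {0..1} t)) {..t} = measure lborel {0..t}"
    unfolding measure_def by simp
  also have "\<dots> = t" using t by simp
  finally show ?thesis .
qed

end


definition Fmap :: "real \<Rightarrow> bool \<Rightarrow> real \<times> real \<Rightarrow> real \<times> real" where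
  "Fmap q s p = (if s then q + fst p / 2 else fst p, q + snd p / 2)"

lemma Fmap_meas: "Fmap q s \<in> borel_measurable borel"
proof (cases s)
  case True
  then have "Fmap q s = (\<lambda>p. (q + fst p / 2, q + snd p / 2))" by (auto simp: Fmap_def fun_eq_iff)
  also have "\<dots> \<in> borel_measurable borel"
    by (intro borel_measurable_continuous_onI continuous_intros) auto
  finally show ?thesis .
next
  case False
  then have "Fmap q s = (\<lambda>p. (fst p, q + snd p / 2))" by (auto simp: Fmap_def fun_eq_iff)
  also have "\<dots> \<in> borel_measurable borel"
    by (intro borel_measurable_continuous_onI continuous_intros) auto
  finally show ?thesis .
qed

definition Pstd :: "'w measure \<Rightarrow> (nat \<Rightarrow> 'w \<Rightarrow> real) \<Rightarrow> (nat + nat \<Rightarrow> real) measure" where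
  "Pstd M Q = PiM Iset (\<lambda>i. case i of Inl _ \<Rightarrow> distr M borel (Q 1) | Inr _ \<Rightarrow> density lborel (\<lambda>t. indicator {0..1} t))"

lemma (in prob_space) prob_split:
  assumes "A \<in> events" "{\<omega>\<in>space M. P \<omega>} \<in> events"
  shows "prob A = prob (A \<inter> {\<omega>\<in>space M. P \<omega>}) + prob (A \<inter> {\<omega>\<in>space M. \<not> P \<omega>})"
proof -
  have e2: "{\<omega>\<in>space M. \<not> P \<omega>} \<in> events"
  proof -
    have "{\<omega>\<in>space M. \<not> P \<omega>} = space M - {\<omega>\<in>space M. P \<omega>}" by auto
    then show ?thesis using assms(2) by auto
  qed
  have "A = (A \<inter> {\<omega>\<in>space M. P \<omega>}) \<union> (A \<inter> {\<omega>\<in>space M. \<not> P \<omega>})"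
    using sets.sets_into_space[OF assms(1)] by auto
  then have "prob A = prob ((A \<inter> {\<omega>\<in>space M. P \<omega>}) \<union> (A \<inter> {\<omega>\<in>space M. \<not> P \<omega>}))" by simp
  also have "\<dots> = prob (A \<inter> {\<omega>\<in>space M. P \<omega>}) + prob (A \<inter> {\<omega>\<in>space M. \<not> P \<omega>})"
    by (rule finite_measure_Union) (use assms e2 in auto)
  finally show ?thesis .
qed

context proc begin

lemma Phi_meas: "Phi y \<in> borel_measurable (PiM Iset (\<lambda>_. borel))"
proof -
  have c: "(\<lambda>f. f (Inl n)) \<in> borel_measurable (PiM Iset (\<lambda>_. borel))" if "n \<ge> 1" for n
    using that by (intro measurable_component_singleton) (auto simp: Iset_def)
  have c': "(\<lambda>f. f (Inr n)) \<in> borel_measurable (PiM Iset (\<lambda>_. borel))" if "n \<ge> 1" for n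
    using that by (intro measurable_component_singleton) (auto simp: Iset_def)
  have "(\<lambda>f. zeta (\<lambda>n. f (Inl n)) (\<lambda>n. f (Inr n)) z) \<in> borel_measurable (PiM Iset (\<lambda>_. borel))" for z
    using zeta_measurable[where q="\<lambda>n f. f (Inl n)" and u="\<lambda>n f. f (Inr n)" and N="PiM Iset (\<lambda>_. borel)" and y=z, OF c c'] by simp
  then show ?thesis unfolding Phi_def[abs_def] by (intro borel_measurable_Pair)
qed

lemma Zv_meas: "Zv y Q U \<in> borel_measurable M"
proof -
  have "(\<lambda>\<omega>. zeta (\<lambda>n. Q n \<omega>) (\<lambda>n. U n \<omega>) z) \<in> borel_measurable M" for z
    using zeta_measurable[where q=Q and u=U and N=M and y=z, OF Qm Um] by simp
  then show ?thesis unfolding Zv_def[abs_def] by (intro borel_measurable_Pair)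
qed

lemma law: "distr M (PiM Iset (\<lambda>_. borel)) (\<lambda>\<omega>. \<lambda>i\<in>Iset. Xf Q U i \<omega>) = Pstd M Q"
proof -
  have ne: "Iset \<noteq> {}" by (auto simp: Iset_def)
  have "distr M (PiM Iset (\<lambda>_. borel)) (\<lambda>\<omega>. \<lambda>i\<in>Iset. Xf Q U i \<omega>) = PiM Iset (\<lambda>i. distr M borel (Xf Q U i))"
    by (rule indep_vars_iff_distr_eq_PiM'[THEN iffD1, OF ne Xrv ind])
  also have "\<dots> = Pstd M Q" unfolding Pstd_def
  proof (intro PiM_cong refl)
    fix i assume "i \<in> Iset"
    then obtain k where k: "k \<ge> 1" "i = Inl k \<or> i = Inr k" by (auto simp: Iset_def)
    then show "distr M borel (Xf Q U i) = (case i of Inl _ \<Rightarrow> distr M borel (Q 1) | Inr _ \<Rightarrow> density lborel (\<lambda>t. indicator {0..1} t))"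
      using distr_Q[OF k(1)] distr_U[OF k(1)] by (auto simp: Xf_def)
  qed
  finally show ?thesis .
qed

lemma Zv_Phi: "Zv y Q U \<omega> = Phi y (\<lambda>i\<in>Iset. Xf Q U i \<omega>)"
proof -
  have "zeta (\<lambda>n. Q n \<omega>) (\<lambda>n. U n \<omega>) z = zeta (\<lambda>n. (\<lambda>i\<in>Iset. Xf Q U i \<omega>) (Inl n)) (\<lambda>n. (\<lambda>i\<in>Iset. Xf Q U i \<omega>) (Inr n)) z" for z
    by (rule zeta_cong) (auto simp: Iset_def Xf_def)
  then show ?thesis by (simp add: Zv_def Phi_def)
qed

lemma prob_Zv:
  assumes C: "C \<in> sets borel"
  shows "prob {\<omega>\<in>space M. Zv y Q U \<omega> \<in> C} = measure (Pstd M Q) (Phi y -` C \<inter> space (PiM Iset (\<lambda>_. borel)))"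
proof -
  let ?N = "PiM Iset (\<lambda>_::nat+nat. borel :: real measure)"
  let ?X = "\<lambda>\<omega>. \<lambda>i\<in>Iset. Xf Q U i \<omega>"
  have Xm: "?X \<in> measurable M ?N" using Xrv by (intro measurable_restrict) auto
  have "measure (Pstd M Q) (Phi y -` C \<inter> space ?N) = measure (distr M ?N ?X) (Phi y -` C \<inter> space ?N)"
    by (simp add: law)
  also have "\<dots> = measure M (?X -` (Phi y -` C \<inter> space ?N) \<inter> space M)"
    by (rule measure_distr[OF Xm]) (rule measurable_sets[OF Phi_meas C])
  also have "?X -` (Phi y -` C \<inter> space ?N) \<inter> space M = {\<omega>\<in>space M. Zv y Q U \<omega> \<in> C}"
    using measurable_space[OF Xm] by (auto simp: Zv_Phi)
  finally show ?thesis by simp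
qed

lemma prob_Zv_shift:
  assumes C: "C \<in> sets borel"
  shows "prob {\<omega>\<in>space M. Zv y (\<lambda>k. Q (Suc k)) (\<lambda>k. U (Suc k)) \<omega> \<in> C} = prob {\<omega>\<in>space M. Zv y Q U \<omega> \<in> C}"
proof -
  interpret S: proc M "\<lambda>k. Q (Suc k)" "\<lambda>k. U (Suc k)" by (rule proc_shift)
  have "Pstd M (\<lambda>k. Q (Suc k)) = Pstd M Q" unfolding Pstd_def using distr_Q[of "Suc 1"] by simp
  then show ?thesis using S.prob_Zv[OF C] prob_Zv[OF C] by simp
qed

end

context proc begin

lemma indep_head: "indep_var borel (\<lambda>\<omega>. (Q 1 \<omega>, U 1 \<omega>)) borel (Zv y (\<lambda>k. Q (Suc k)) (\<lambda>k. U (Suc k)))"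
proof -
  define A0 where "A0 = {Inl 1, Inr 1 :: nat + nat}"
  define B0 where "B0 = Iset - A0"
  define Y1 where "Y1 = (\<lambda>f::nat+nat \<Rightarrow> real. (f (Inl 1), f (Inr 1)))"
  define Y2 where "Y2 = (\<lambda>f::nat+nat \<Rightarrow> real. (zeta (\<lambda>n. f (Inl (Suc n))) (\<lambda>n. f (Inr (Suc n))) y,
      zeta (\<lambda>n. f (Inl (Suc n))) (\<lambda>n. f (Inr (Suc n))) 1))"
  have iv: "indep_var (PiM A0 (\<lambda>_. borel)) (\<lambda>\<omega>. restrict (\<lambda>i. Xf Q U i \<omega>) A0) (PiM B0 (\<lambda>_. borel)) (\<lambda>\<omega>. restrict (\<lambda>i. Xf Q U i \<omega>) B0)"
    by (rule indep_var_restrict[OF ind]) (auto simp: A0_def B0_def Iset_def)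
  have m1: "Y1 \<in> borel_measurable (PiM A0 (\<lambda>_. borel))"
    unfolding Y1_def by (intro borel_measurable_Pair measurable_component_singleton) (auto simp: A0_def)
  have c: "(\<lambda>f. f (Inl (Suc n))) \<in> borel_measurable (PiM B0 (\<lambda>_. borel))" if "n \<ge> 1" for n
    using that by (intro measurable_component_singleton) (auto simp: B0_def A0_def Iset_def)
  have c': "(\<lambda>f. f (Inr (Suc n))) \<in> borel_measurable (PiM B0 (\<lambda>_. borel))" if "n \<ge> 1" for n
    using that by (intro measurable_component_singleton) (auto simp: B0_def A0_def Iset_def)
  have "(\<lambda>f. zeta (\<lambda>n. f (Inl (Suc n))) (\<lambda>n. f (Inr (Suc n))) z) \<in> borel_measurable (PiM B0 (\<lambda>_. borel))" for z
    using zeta_measurable[where q="\<lambda>n f. f (Inl (Suc n))" and u="\<lambda>n f. f (Inr (Suc n))" and N="PiM B0 (\<lambda>_. borel)" and y=z, OF c c'] by simp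
  then have m2: "Y2 \<in> borel_measurable (PiM B0 (\<lambda>_. borel))"
    unfolding Y2_def by (intro borel_measurable_Pair)
  have "indep_var borel (Y1 \<circ> (\<lambda>\<omega>. restrict (\<lambda>i. Xf Q U i \<omega>) A0)) borel (Y2 \<circ> (\<lambda>\<omega>. restrict (\<lambda>i. Xf Q U i \<omega>) B0))"
    by (rule indep_var_compose[OF iv m1 m2])
  moreover have "Y1 \<circ> (\<lambda>\<omega>. restrict (\<lambda>i. Xf Q U i \<omega>) A0) = (\<lambda>\<omega>. (Q 1 \<omega>, U 1 \<omega>))"
    by (auto simp: A0_def Xf_def fun_eq_iff Y1_def)
  moreover have "Y2 \<circ> (\<lambda>\<omega>. restrict (\<lambda>i. Xf Q U i \<omega>) B0) = Zv y (\<lambda>k. Q (Suc k)) (\<lambda>k. U (Suc k))"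
  proof
    fix \<omega>
    have "zeta (\<lambda>n. (\<lambda>i\<in>B0. Xf Q U i \<omega>) (Inl (Suc n))) (\<lambda>n. (\<lambda>i\<in>B0. Xf Q U i \<omega>) (Inr (Suc n))) z
        = zeta (\<lambda>n. Q (Suc n) \<omega>) (\<lambda>n. U (Suc n) \<omega>) z" for z
      by (rule zeta_cong) (auto simp: B0_def A0_def Iset_def Xf_def)
    then show "(Y2 \<circ> (\<lambda>\<omega>. restrict (\<lambda>i. Xf Q U i \<omega>) B0)) \<omega> = Zv y (\<lambda>k. Q (Suc k)) (\<lambda>k. U (Suc k)) \<omega>"
      by (simp add: Y2_def Zv_def)
  qed
  ultimately show ?thesis by simp
qed

lemma prob_head:
  assumes S: "S \<in> sets borel"
  shows "prob {\<omega>\<in>space M. Q 1 \<omega> = q \<and> U 1 \<omega> \<in> S} = prob {\<omega>\<in>space M. Q 1 \<omega> = q} * prob {\<omega>\<in>space M. U 1 \<omega> \<in> S}"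
proof -
  let ?A = "\<lambda>i::nat+nat. case i of Inl _ \<Rightarrow> {q} | Inr _ \<Rightarrow> S"
  have "prob (\<Inter>i\<in>{Inl 1, Inr 1}. Xf Q U i -` ?A i \<inter> space M) = (\<Prod>i\<in>{Inl 1, Inr 1}. prob (Xf Q U i -` ?A i \<inter> space M))"
    by (rule indep_varsD[OF ind]) (auto simp: Iset_def S)
  moreover have "(\<Inter>i\<in>{Inl 1, Inr 1}. Xf Q U i -` ?A i \<inter> space M) = {\<omega>\<in>space M. Q 1 \<omega> = q \<and> U 1 \<omega> \<in> S}"
    by (auto simp: Xf_def)
  moreover have "(\<Prod>i\<in>{Inl 1, Inr 1}. prob (Xf Q U i -` ?A i \<inter> space M)) = prob (Q 1 -` {q} \<inter> space M) * prob (U 1 -` S \<inter> space M)"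
    by (simp add: Xf_def)
  moreover have "Q 1 -` {q} \<inter> space M = {\<omega>\<in>space M. Q 1 \<omega> = q}" "U 1 -` S \<inter> space M = {\<omega>\<in>space M. U 1 \<omega> \<in> S}"
    by auto
  ultimately show ?thesis by simp
qed

lemma AE_good: "AE \<omega> in M. goodseq (\<lambda>n. Q n \<omega>) \<and> (\<forall>n\<ge>1. U n \<omega> \<le> 1)"
proof -
  have "AE \<omega> in M. n \<ge> 1 \<longrightarrow> Q n \<omega> \<in> {0,1} \<and> U n \<omega> \<le> 1" for n
  proof (cases "n \<ge> 1")
    case True
    note [measurable] = Qm[OF True] Um[OF True]
    have "prob (Q n -` {0,1} \<inter> space M) = 1" using prob_Q[OF True, of "{0,1}"] by simp
    then have a1: "AE \<omega> in M. \<omega> \<in> Q n -` {0,1} \<inter> space M" by (rule AE_prob_1)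
    have "prob {\<omega>\<in>space M. U n \<omega> \<le> 1} = 1" using prob_U_le[OF True, of 1] by simp
    then have a2: "AE \<omega> in M. \<omega> \<in> {\<omega>\<in>space M. U n \<omega> \<le> 1}" by (rule AE_prob_1)
    from a1 a2 show ?thesis by eventually_elim auto
  qed simp
  then have "AE \<omega> in M. \<forall>n. n \<ge> 1 \<longrightarrow> Q n \<omega> \<in> {0,1} \<and> U n \<omega> \<le> 1"
    by (subst AE_all_countable) auto
  then show ?thesis by eventually_elim (auto simp: goodseq_def)
qed

lemma Zv_decomp:
  assumes g: "goodseq (\<lambda>n. Q n \<omega>)" and u: "\<forall>n\<ge>1. U n \<omega> \<le> 1"
  shows "Zv y Q U \<omega> = Fmap (Q 1 \<omega>) (U 1 \<omega> \<le> y) (Zv y (\<lambda>k. Q (Suc k)) (\<lambda>k. U (Suc k)) \<omega>)"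
proof -
  have "U 1 \<omega> \<le> 1" using u by auto
  then show ?thesis
    using zeta_shift[OF g, of "\<lambda>n. U n \<omega>" y] zeta_shift[OF g, of "\<lambda>n. U n \<omega>" 1]
    by (auto simp: Zv_def Fmap_def indicator_def)
qed

lemma mu_Zv: "mu M Q U y = distr M borel (Zv y Q U)"
  unfolding mu_def by (intro arg_cong[where f="distr M borel"]) (simp add: fun_eq_iff Zv_def)

lemma mu_prob: "C \<in> sets borel \<Longrightarrow> measure (mu M Q U y) C = prob {\<omega>\<in>space M. Zv y Q U \<omega> \<in> C}"
  unfolding mu_Zv by (subst measure_distr[OF Zv_meas]) (auto intro!: arg_cong[where f=prob])

lemma mu_prob_space: "prob_space (mu M Q U y)"
  unfolding mu_Zv by (rule prob_space_distr[OF Zv_meas])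

lemma mu_sets: "sets (mu M Q U y) = sets borel"
  unfolding mu_Zv by simp

lemma mu_support: "measure (mu M Q U y) ({0..2} \<times> {0..2}) = 1"
proof -
  note [measurable] = Zv_meas
  have "({0..2} \<times> {0..2} :: (real \<times> real) set) \<in> sets borel"
    by (intro borel_closed closed_Times closed_atLeastAtMost)
  have "prob {\<omega>\<in>space M. Zv y Q U \<omega> \<in> {0..2} \<times> {0..2}} = 1"
  proof (subst prob_Collect_eq_1)
    have "({0..2} \<times> {0..2} :: (real \<times> real) set) \<in> sets borel"
      by (intro borel_closed closed_Times closed_atLeastAtMost)
    moreover have "{\<omega>\<in>space M. Zv y Q U \<omega> \<in> {0..2} \<times> {0..2}} = Zv y Q U -` ({0..2} \<times> {0..2}) \<inter> space M" by auto
    ultimately show "{\<omega>\<in>space M. Zv y Q U \<omega> \<in> {0..2} \<times> {0..2}} \<in> events"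
      using measurable_sets[OF Zv_meas] by simp
    show "AE \<omega> in M. Zv y Q U \<omega> \<in> {0..2} \<times> {0..2}"
      using AE_good by eventually_elim (auto simp: Zv_def zeta_bounds)
  qed
  then show ?thesis using mu_prob[of "{0..2} \<times> {0..2}" y] \<open>_ \<in> sets borel\<close> by simp
qed

end

context proc begin

lemma selfsim:
  assumes x: "0 < x" "x < 1" and B: "B \<in> sets borel"
  shows "measure (mu M Q U x) B = (\<Sum>q\<in>{0,1::real}. x/2 * measure (mu M Q U x) (Fmap q True -` B)
            + (1-x)/2 * measure (mu M Q U x) (Fmap q False -` B))"
proof -
  interpret S: proc M "\<lambda>k. Q (Suc k)" "\<lambda>k. U (Suc k)" by (rule proc_shift)
  let ?Z = "Zv x Q U" and ?Z' = "Zv x (\<lambda>k. Q (Suc k)) (\<lambda>k. U (Suc k))"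
  have FB: "Fmap q s -` B \<in> sets borel" for q s
    using measurable_sets[OF Fmap_meas B] by simp
  have pZ: "?Z -` C \<inter> space M \<in> events" if "C \<in> sets borel" for C
    using measurable_sets[OF Zv_meas that] .
  have pZ': "?Z' -` C \<inter> space M \<in> events" if "C \<in> sets borel" for C
    using measurable_sets[OF S.Zv_meas that] .
  have pQ: "Q 1 -` C \<inter> space M \<in> events" if "C \<in> sets borel" for C
    using measurable_sets[OF Qm that] by simp
  have pU: "U 1 -` C \<inter> space M \<in> events" if "C \<in> sets borel" for C
    using measurable_sets[OF Um that] by simp
  have trm: "prob {\<omega>\<in>space M. ?Z \<omega> \<in> B \<and> Q 1 \<omega> = q \<and> (U 1 \<omega> \<le> x) = s}
      = 1/2 * (if s then x else 1-x) * measure (mu M Q U x) (Fmap q s -` B)" if q: "q \<in> {0,1}" for q s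
  proof -
    define Su where "Su = {u::real. (u \<le> x) = s}"
    have Su: "Su \<in> sets borel"
    proof (cases s)
      case True then have "Su = {..x}" by (auto simp: Su_def) then show ?thesis by simp
    next
      case False then have "Su = {x<..}" by (auto simp: Su_def) then show ?thesis by simp
    qed
    have "prob {\<omega>\<in>space M. ?Z \<omega> \<in> B \<and> Q 1 \<omega> = q \<and> (U 1 \<omega> \<le> x) = s}
        = prob {\<omega>\<in>space M. (Q 1 \<omega>, U 1 \<omega>) \<in> {q} \<times> Su \<and> ?Z' \<omega> \<in> Fmap q s -` B}"
    proof (rule measure_eq_AE)
      show "AE \<omega> in M. (\<omega> \<in> {\<omega>\<in>space M. ?Z \<omega> \<in> B \<and> Q 1 \<omega> = q \<and> (U 1 \<omega> \<le> x) = s}) =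
          (\<omega> \<in> {\<omega>\<in>space M. (Q 1 \<omega>, U 1 \<omega>) \<in> {q} \<times> Su \<and> ?Z' \<omega> \<in> Fmap q s -` B})"
        using AE_good
      proof eventually_elim
        case (elim \<omega>)
        then have "?Z \<omega> = Fmap (Q 1 \<omega>) (U 1 \<omega> \<le> x) (?Z' \<omega>)" by (intro Zv_decomp) auto
        then show ?case by (auto simp: Su_def)
      qed
    next
      have "{\<omega>\<in>space M. ?Z \<omega> \<in> B \<and> Q 1 \<omega> = q \<and> (U 1 \<omega> \<le> x) = s} = (?Z -` B \<inter> space M) \<inter> (Q 1 -` {q} \<inter> space M) \<inter> (U 1 -` Su \<inter> space M)"
        by (auto simp: Su_def)
      then show "{\<omega>\<in>space M. ?Z \<omega> \<in> B \<and> Q 1 \<omega> = q \<and> (U 1 \<omega> \<le> x) = s} \<in> events"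
        using pZ[OF B] pQ[of "{q}"] pU[OF Su] by auto
    next
      have "{\<omega>\<in>space M. (Q 1 \<omega>, U 1 \<omega>) \<in> {q} \<times> Su \<and> ?Z' \<omega> \<in> Fmap q s -` B} = (?Z' -` (Fmap q s -` B) \<inter> space M) \<inter> (Q 1 -` {q} \<inter> space M) \<inter> (U 1 -` Su \<inter> space M)"
        by auto
      then show "{\<omega>\<in>space M. (Q 1 \<omega>, U 1 \<omega>) \<in> {q} \<times> Su \<and> ?Z' \<omega> \<in> Fmap q s -` B} \<in> events"
        using pZ'[OF FB[of q s]] pQ[of "{q}"] pU[OF Su] by auto
    qed
    also have "\<dots> = prob ((\<lambda>\<omega>. ((Q 1 \<omega>, U 1 \<omega>), ?Z' \<omega>)) -` (({q} \<times> Su) \<times> (Fmap q s -` B)) \<inter> space M)"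
      by (auto intro!: arg_cong[where f=prob])
    also have "\<dots> = prob ((\<lambda>\<omega>. (Q 1 \<omega>, U 1 \<omega>)) -` ({q} \<times> Su) \<inter> space M) * prob (?Z' -` (Fmap q s -` B) \<inter> space M)"
      by (rule indep_varD[OF indep_head]) (auto intro!: borel_Times Su FB)
    also have "prob ((\<lambda>\<omega>. (Q 1 \<omega>, U 1 \<omega>)) -` ({q} \<times> Su) \<inter> space M) = prob {\<omega>\<in>space M. Q 1 \<omega> = q \<and> U 1 \<omega> \<in> Su}"
      by (auto intro!: arg_cong[where f=prob])
    also have "\<dots> = prob {\<omega>\<in>space M. Q 1 \<omega> = q} * prob {\<omega>\<in>space M. U 1 \<omega> \<in> Su}"
      by (rule prob_head[OF Su])
    also have "prob {\<omega>\<in>space M. Q 1 \<omega> = q} = 1/2" using q Q0[of 1] Q1[of 1] by auto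
    also have "prob {\<omega>\<in>space M. U 1 \<omega> \<in> Su} = (if s then x else 1-x)"
    proof (cases s)
      case True
      then show ?thesis using prob_U_le[of 1 x] x by (simp add: Su_def)
    next
      case False
      have "{\<omega>\<in>space M. U 1 \<omega> \<le> x} = U 1 -` {..x} \<inter> space M" by auto
      then have ev: "{\<omega>\<in>space M. U 1 \<omega> \<le> x} \<in> events" using pU[of "{..x}"] by simp
      have "{\<omega>\<in>space M. U 1 \<omega> \<in> Su} = space M - {\<omega>\<in>space M. U 1 \<omega> \<le> x}"
        using False by (auto simp: Su_def)
      then show ?thesis using prob_compl[OF ev] prob_U_le[of 1 x] x False by simp
    qed
    also have "prob (?Z' -` (Fmap q s -` B) \<inter> space M) = measure (mu M Q U x) (Fmap q s -` B)"
    proof -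
      have "?Z' -` (Fmap q s -` B) \<inter> space M = {\<omega>\<in>space M. ?Z' \<omega> \<in> Fmap q s -` B}" by auto
      then show ?thesis using prob_Zv_shift[OF FB[of q s], of x] mu_prob[OF FB[of q s], of x] by simp
    qed
    finally show ?thesis by simp
  qed
  define A where "A = {\<omega>\<in>space M. ?Z \<omega> \<in> B}"
  have "A = ?Z -` B \<inter> space M" unfolding A_def by auto
  then have Aev: "A \<in> events" using pZ[OF B] by simp
  have "{\<omega>\<in>space M. Q 1 \<omega> = q} = Q 1 -` {q} \<inter> space M" for q by auto
  then have evQ: "{\<omega>\<in>space M. Q 1 \<omega> = q} \<in> events" for q using pQ[of "{q}"] by simp
  have "{\<omega>\<in>space M. U 1 \<omega> \<le> x} = U 1 -` {..x} \<inter> space M" by auto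
  then have evU: "{\<omega>\<in>space M. U 1 \<omega> \<le> x} \<in> events" using pU[of "{..x}"] by simp
  have split2: "prob (A \<inter> {\<omega>\<in>space M. Q 1 \<omega> = q}) = 1/2 * x * measure (mu M Q U x) (Fmap q True -` B)
      + 1/2 * (1-x) * measure (mu M Q U x) (Fmap q False -` B)" if q: "q \<in> {0,1}" for q
  proof -
    have "prob (A \<inter> {\<omega>\<in>space M. Q 1 \<omega> = q}) = prob (A \<inter> {\<omega>\<in>space M. Q 1 \<omega> = q} \<inter> {\<omega>\<in>space M. U 1 \<omega> \<le> x})
       + prob (A \<inter> {\<omega>\<in>space M. Q 1 \<omega> = q} \<inter> {\<omega>\<in>space M. \<not> U 1 \<omega> \<le> x})"
      by (rule prob_split) (use Aev evQ evU in auto)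
    also have "A \<inter> {\<omega>\<in>space M. Q 1 \<omega> = q} \<inter> {\<omega>\<in>space M. U 1 \<omega> \<le> x} = {\<omega>\<in>space M. ?Z \<omega> \<in> B \<and> Q 1 \<omega> = q \<and> (U 1 \<omega> \<le> x) = True}"
      by (auto simp: A_def)
    also have "A \<inter> {\<omega>\<in>space M. Q 1 \<omega> = q} \<inter> {\<omega>\<in>space M. \<not> U 1 \<omega> \<le> x} = {\<omega>\<in>space M. ?Z \<omega> \<in> B \<and> Q 1 \<omega> = q \<and> (U 1 \<omega> \<le> x) = False}"
      by (auto simp: A_def)
    finally show ?thesis using trm[OF q, of True] trm[OF q, of False] by simp
  qed
  have "measure (mu M Q U x) B = prob A" unfolding A_def by (rule mu_prob[OF B])
  also have "\<dots> = prob (A \<inter> {\<omega>\<in>space M. Q 1 \<omega> = 0}) + prob (A \<inter> {\<omega>\<in>space M. \<not> Q 1 \<omega> = 0})"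
    by (rule prob_split) (use Aev evQ in auto)
  also have "prob (A \<inter> {\<omega>\<in>space M. \<not> Q 1 \<omega> = 0}) = prob (A \<inter> {\<omega>\<in>space M. Q 1 \<omega> = 1})"
  proof (rule measure_eq_AE)
    show "AE \<omega> in M. (\<omega> \<in> A \<inter> {\<omega>\<in>space M. \<not> Q 1 \<omega> = 0}) = (\<omega> \<in> A \<inter> {\<omega>\<in>space M. Q 1 \<omega> = 1})"
      using AE_good by eventually_elim (auto simp: goodseq_def)
  qed (use Aev evQ in auto)
  finally show ?thesis using split2[of 0] split2[of 1] by simp
qed

end

definition Dy :: "nat \<Rightarrow> int \<Rightarrow> real set" where
  "Dy a k = {2 * of_int k * (1/2)^a ..< 2 * (of_int k + 1) * (1/2)^a}"

lemma Dy_borel[simp]: "Dy a k \<in> sets borel"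
  by (simp add: Dy_def)

lemma Dy_h0: "(\<lambda>y. y/2) -` Dy (Suc a) k = Dy a k"
  by (auto simp: Dy_def field_simps)

lemma two_pow_half: "(2::real)^a * (1/2)^a = 1"
  by (simp add: power_mult_distrib[symmetric])

lemma Dy_h1: "(\<lambda>y. 1 + y/2) -` Dy (Suc a) k = Dy a (k - 2^a)"
proof -
  have e: "2 * of_int (k - 2^a) * (1/2::real)^a = 2 * of_int k * (1/2)^a - 2"
    using two_pow_half[of a] by (simp add: algebra_simps)
  have e2: "2 * (of_int (k - 2^a) + 1) * (1/2::real)^a = 2 * (of_int k + 1) * (1/2)^a - 2"
    using two_pow_half[of a] by (simp add: algebra_simps)
  show ?thesis unfolding Dy_def e e2 by (auto simp: field_simps)
qed

lemma Dy_neg: "k + 1 \<le> 0 \<Longrightarrow> Dy a k \<subseteq> {..<0}"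
proof
  fix y assume k: "k + 1 \<le> 0" and y: "y \<in> Dy a k"
  have "of_int k + 1 \<le> (0::real)" using k by linarith
  then have "2 * (of_int k + 1) * (1/2::real)^a \<le> 0"
    by (simp add: mult_nonpos_nonneg)
  then show "y \<in> {..<0}" using y by (auto simp: Dy_def)
qed

lemma Dy_big: "k \<ge> 2^a \<Longrightarrow> Dy a k \<subseteq> {2..}"
proof
  fix y assume k: "k \<ge> 2^a" and y: "y \<in> Dy a k"
  have "of_int k \<ge> (2::real)^a" using k by (metis of_int_le_iff of_int_numeral of_int_power)
  then have "2 * of_int k * (1/2::real)^a \<ge> 2 * 2^a * (1/2)^a"
    by (intro mult_right_mono mult_left_mono) auto
  then have "2 * of_int k * (1/2::real)^a \<ge> 2" using two_pow_half[of a] by simp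
  then show "y \<in> {2..}" using y by (auto simp: Dy_def)
qed

lemma hpre_borel: "B \<in> sets borel \<Longrightarrow> (\<lambda>y::real. c + y/2) -` B \<in> sets borel"
proof -
  assume B: "B \<in> sets borel"
  have "(\<lambda>y::real. c + y/2) \<in> borel_measurable borel"
    by (intro borel_measurable_continuous_onI continuous_intros) auto
  from measurable_sets[OF this B] show ?thesis by simp
qed

locale half =
  fixes \<rho> :: "real set \<Rightarrow> real"
  assumes nn: "B \<in> sets borel \<Longrightarrow> 0 \<le> \<rho> B"
    and mono: "A \<in> sets borel \<Longrightarrow> B \<in> sets borel \<Longrightarrow> A \<subseteq> B \<Longrightarrow> \<rho> A \<le> \<rho> B"
    and sub: "A \<in> sets borel \<Longrightarrow> B \<in> sets borel \<Longrightarrow> \<rho> (A \<union> B) \<le> \<rho> A + \<rho> B"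
    and rec: "B \<in> sets borel \<Longrightarrow> \<rho> B = (\<rho> ((\<lambda>y. y/2) -` B) + \<rho> ((\<lambda>y. 1 + y/2) -` B)) / 2"
    and univ: "\<rho> UNIV \<le> 1" and base: "\<rho> {0..2} = 1"
    and out: "B \<in> sets borel \<Longrightarrow> B \<inter> {0..2} = {} \<Longrightarrow> \<rho> B = 0"
begin

lemma two: "\<rho> {2} = 0"
proof -
  have "\<rho> {2} = (\<rho> ((\<lambda>y. y/2) -` {2}) + \<rho> ((\<lambda>y. 1 + y/2) -` {2})) / 2" by (rule rec) simp
  moreover have "(\<lambda>y::real. y/2) -` {2} = {4}" by auto
  moreover have "(\<lambda>y::real. 1 + y/2) -` {2} = {2}" by auto
  moreover have "\<rho> {4} = 0" by (rule out) auto
  ultimately show ?thesis by simp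
qed

lemma out': assumes B: "B \<in> sets borel" and d: "B \<inter> {0..<2} = {}" shows "\<rho> B = 0"
proof -
  have B2: "B - {2} \<in> sets borel" using B by auto
  have "\<rho> B \<le> \<rho> ((B - {2}) \<union> {2})" by (rule mono) (use B in auto)
  also have "\<dots> \<le> \<rho> (B - {2}) + \<rho> {2}" by (rule sub) (use B2 in auto)
  also have "\<rho> (B - {2}) = 0" by (rule out[OF B2]) (use d in auto)
  finally show ?thesis using two nn[OF B] by simp
qed

lemma Dy_up: "\<rho> (Dy a k) \<le> (1/2)^a"
proof (induction a arbitrary: k)
  case 0
  have "\<rho> (Dy 0 k) \<le> \<rho> UNIV" by (rule mono) auto
  then show ?case using univ by simp
next
  case (Suc a)
  have r: "\<rho> (Dy (Suc a) k) = (\<rho> (Dy a k) + \<rho> (Dy a (k - 2^a))) / 2"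
    using rec[of "Dy (Suc a) k"] by (simp add: Dy_h0 Dy_h1)
  show ?case
  proof (cases "k < 2^a")
    case True
    have "\<rho> (Dy a (k - 2^a)) = 0"
      by (rule out') (use Dy_neg[of "k - 2^a" a] True in auto)
    then show ?thesis using r Suc.IH[of k] by simp
  next
    case False
    have "\<rho> (Dy a k) = 0"
      by (rule out') (use Dy_big[of a k] False in auto)
    then show ?thesis using r Suc.IH[of "k - 2^a"] by simp
  qed
qed

lemma low: "(1/2)^a \<le> \<rho> {0..2*(1/2)^a}"
proof (induction a)
  case 0 then show ?case using base by simp
next
  case (Suc a)
  have r: "\<rho> {0..2*(1/2)^Suc a} = (\<rho> ((\<lambda>y. y/2) -` {0..2*(1/2)^Suc a}) + \<rho> ((\<lambda>y. 1 + y/2) -` {0..2*(1/2)^Suc a})) / 2"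
    by (rule rec) simp
  have "(\<lambda>y. y/2) -` {0..2*(1/2::real)^Suc a} = {0..2*(1/2)^a}" by (auto simp: field_simps)
  moreover have "0 \<le> \<rho> ((\<lambda>y. 1 + y/2) -` {0..2*(1/2::real)^Suc a})" by (rule nn) (rule hpre_borel[of _ 1, simplified], simp)
  ultimately show ?case using r Suc.IH by simp
qed

end


lemma Fmap_T_pre: "Fmap q True -` (A \<times> B) = ((\<lambda>y. q + y/2) -` A) \<times> ((\<lambda>y. q + y/2) -` B)"
  by (auto simp: Fmap_def)
lemma Fmap_F_pre: "Fmap q False -` (A \<times> B) = A \<times> ((\<lambda>y. q + y/2) -` B)"
  by (auto simp: Fmap_def)

locale ssm = prob_space \<nu> for \<nu> :: "(real \<times> real) measure" +
  fixes x :: real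
  assumes sts: "sets \<nu> = sets borel" and x0: "0 < x" and x1: "x < 1"
    and supp: "measure \<nu> ({0..2} \<times> {0..2}) = 1"
    and F3: "\<And>B. B \<in> sets borel \<Longrightarrow> measure \<nu> B = (\<Sum>q\<in>{0,1::real}. x/2 * measure \<nu> (Fmap q True -` B)
            + (1-x)/2 * measure \<nu> (Fmap q False -` B))"
begin

lemma sq_borel: "({0..2} \<times> {0..2} :: (real \<times> real) set) \<in> sets borel"
  by (intro borel_closed closed_Times closed_atLeastAtMost)

lemma m_mono: "A \<subseteq> B \<Longrightarrow> B \<in> sets borel \<Longrightarrow> measure \<nu> A \<le> measure \<nu> B"
  by (rule finite_measure_mono) (auto simp: sts)

lemma m_sub: "A \<in> sets borel \<Longrightarrow> B \<in> sets borel \<Longrightarrow> measure \<nu> (A \<union> B) \<le> measure \<nu> A + measure \<nu> B"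
  by (rule measure_subadditive) (auto simp: sts)

lemma out2:
  assumes B: "B \<in> sets borel" and d: "B \<inter> ({0..2} \<times> {0..2}) = {}"
  shows "measure \<nu> B = 0"
proof -
  have "measure \<nu> (B \<union> ({0..2} \<times> {0..2})) = measure \<nu> B + measure \<nu> ({0..2} \<times> {0..2})"
    by (rule finite_measure_Union) (use B d sq_borel in \<open>auto simp: sts\<close>)
  moreover have "measure \<nu> (B \<union> ({0..2} \<times> {0..2})) \<le> 1" by (rule prob_le_1)
  ultimately show ?thesis using supp measure_nonneg[of \<nu> B] by simp
qed

lemma half1: "half (\<lambda>B. measure \<nu> (B \<times> UNIV))"
proof
  fix A B :: "real set"
  show "0 \<le> measure \<nu> (B \<times> UNIV)" by simp
  show "A \<in> sets borel \<Longrightarrow> B \<in> sets borel \<Longrightarrow> A \<subseteq> B \<Longrightarrow> measure \<nu> (A \<times> UNIV) \<le> measure \<nu> (B \<times> UNIV)"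
    by (intro m_mono borel_Times) auto
  show "A \<in> sets borel \<Longrightarrow> B \<in> sets borel \<Longrightarrow> measure \<nu> ((A \<union> B) \<times> UNIV) \<le> measure \<nu> (A \<times> UNIV) + measure \<nu> (B \<times> UNIV)"
    using m_sub[of "A \<times> UNIV" "B \<times> UNIV"] borel_Times[of A UNIV] borel_Times[of B UNIV] by (simp add: Sigma_Un_distrib1)
  show "measure \<nu> (UNIV \<times> UNIV) \<le> 1" by (rule prob_le_1)
  show "measure \<nu> ({0..2} \<times> UNIV) = 1"
  proof -
    have "1 \<le> measure \<nu> ({0..2} \<times> UNIV)" using supp m_mono[of "{0..2} \<times> {0..2}" "{0..2} \<times> UNIV"]
        borel_Times[of "{0..2::real}" "UNIV::real set"] by auto
    then show ?thesis using prob_le_1[of "{0..2} \<times> UNIV"] by simp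
  qed
  assume B: "B \<in> sets borel"
  show "B \<inter> {0..2} = {} \<Longrightarrow> measure \<nu> (B \<times> UNIV) = 0"
    by (rule out2) (use B in \<open>auto intro: borel_Times\<close>)
  have "measure \<nu> (B \<times> UNIV) = (\<Sum>q\<in>{0,1::real}. x/2 * measure \<nu> (((\<lambda>y. q + y/2) -` B) \<times> UNIV)
            + (1-x)/2 * measure \<nu> (B \<times> UNIV))"
    using F3[of "B \<times> UNIV"] B by (simp add: Fmap_T_pre Fmap_F_pre borel_Times)
  then have "x * measure \<nu> (B \<times> UNIV) = x/2 * (measure \<nu> (((\<lambda>y. y/2) -` B) \<times> UNIV) + measure \<nu> (((\<lambda>y. 1 + y/2) -` B) \<times> UNIV))"
    by (simp add: algebra_simps)
  then have "x * (2 * measure \<nu> (B \<times> UNIV)) = x * (measure \<nu> (((\<lambda>y. y/2) -` B) \<times> UNIV) + measure \<nu> (((\<lambda>y. 1 + y/2) -` B) \<times> UNIV))"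
    by (simp add: algebra_simps)
  then have "2 * measure \<nu> (B \<times> UNIV) = measure \<nu> (((\<lambda>y. y/2) -` B) \<times> UNIV) + measure \<nu> (((\<lambda>y. 1 + y/2) -` B) \<times> UNIV)"
    using x0 by simp
  then show "measure \<nu> (B \<times> UNIV) = (measure \<nu> (((\<lambda>y. y/2) -` B) \<times> UNIV) + measure \<nu> (((\<lambda>y. 1 + y/2) -` B) \<times> UNIV)) / 2"
    by simp
qed

lemma half2: "half (\<lambda>B. measure \<nu> (UNIV \<times> B))"
proof
  fix A B :: "real set"
  show "0 \<le> measure \<nu> (UNIV \<times> B)" by simp
  show "A \<in> sets borel \<Longrightarrow> B \<in> sets borel \<Longrightarrow> A \<subseteq> B \<Longrightarrow> measure \<nu> (UNIV \<times> A) \<le> measure \<nu> (UNIV \<times> B)"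
    by (intro m_mono borel_Times) auto
  show "A \<in> sets borel \<Longrightarrow> B \<in> sets borel \<Longrightarrow> measure \<nu> (UNIV \<times> (A \<union> B)) \<le> measure \<nu> (UNIV \<times> A) + measure \<nu> (UNIV \<times> B)"
    using m_sub[of "UNIV \<times> A" "UNIV \<times> B"] borel_Times[of UNIV A] borel_Times[of UNIV B] by (simp add: Sigma_Un_distrib2)
  show "measure \<nu> (UNIV \<times> UNIV) \<le> 1" by (rule prob_le_1)
  show "measure \<nu> (UNIV \<times> {0..2}) = 1"
  proof -
    have "1 \<le> measure \<nu> (UNIV \<times> {0..2})" using supp m_mono[of "{0..2} \<times> {0..2}" "UNIV \<times> {0..2}"]
        borel_Times[of "UNIV::real set" "{0..2::real}"] by auto
    then show ?thesis using prob_le_1[of "UNIV \<times> {0..2}"] by simp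
  qed
  assume B: "B \<in> sets borel"
  show "B \<inter> {0..2} = {} \<Longrightarrow> measure \<nu> (UNIV \<times> B) = 0"
    by (rule out2) (use B in \<open>auto intro: borel_Times\<close>)
  have "measure \<nu> (UNIV \<times> B) = (\<Sum>q\<in>{0,1::real}. x/2 * measure \<nu> (UNIV \<times> ((\<lambda>y. q + y/2) -` B))
            + (1-x)/2 * measure \<nu> (UNIV \<times> ((\<lambda>y. q + y/2) -` B)))"
    using F3[of "UNIV \<times> B"] B by (simp add: Fmap_T_pre Fmap_F_pre borel_Times)
  then show "measure \<nu> (UNIV \<times> B) = (measure \<nu> (UNIV \<times> ((\<lambda>y. y/2) -` B)) + measure \<nu> (UNIV \<times> ((\<lambda>y. 1 + y/2) -` B))) / 2"
    by (simp add: field_simps)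
qed

end

lemma pre_half_Icc: "(\<lambda>y. y/2) -` {0..2*(1/2::real)^Suc c} = {0..2*(1/2)^c}"
  by (auto simp: field_simps)

lemma pre_half_Icc2: "(\<lambda>y. y/2) -` {0..(1/2::real)^c} = {0..2*(1/2)^c}"
  by (auto simp: field_simps)

context ssm begin

lemma zero2:
  assumes "Dy b j \<inter> {0..<2} = {}" "A \<in> sets borel"
  shows "measure \<nu> (A \<times> Dy b j) = 0"
proof -
  have "measure \<nu> (UNIV \<times> Dy b j) = 0" by (rule half.out'[OF half2]) (use assms in auto)
  moreover have "measure \<nu> (A \<times> Dy b j) \<le> measure \<nu> (UNIV \<times> Dy b j)"
    by (intro m_mono borel_Times) auto
  ultimately show ?thesis using measure_nonneg[of \<nu> "A \<times> Dy b j"] by simp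
qed

lemma joint_up: "measure \<nu> (Dy a k \<times> Dy b k') \<le> (1/2)^a * ((1+x)/2)^b"
proof (induction b arbitrary: a k k')
  case 0
  have "measure \<nu> (Dy a k \<times> Dy 0 k') \<le> measure \<nu> (Dy a k \<times> UNIV)" by (intro m_mono borel_Times) auto
  also have "\<dots> \<le> (1/2)^a" by (rule half.Dy_up[OF half1])
  finally show ?case by simp
next
  case (Suc b)
  let ?\<beta> = "(1+x)/2"
  have \<beta>0: "0 \<le> ?\<beta>" using x0 by simp
  have G: "x/2 * measure \<nu> ((\<lambda>y. q + y/2) -` Dy a k \<times> Dy b j) + (1-x)/2 * measure \<nu> (Dy a k \<times> Dy b j)
      \<le> (1/2)^a * ?\<beta>^(Suc b)" if q: "q \<in> {0,1}" for q j
  proof (cases a)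
    case 0
    have "measure \<nu> ((\<lambda>y. q + y/2) -` Dy a k \<times> Dy b j) \<le> measure \<nu> (UNIV \<times> Dy b j)"
      by (intro m_mono borel_Times) auto
    also have "\<dots> \<le> (1/2)^b" by (rule half.Dy_up[OF half2])
    also have "(1/2::real)^b \<le> ?\<beta>^b" by (rule power_mono) (use x0 in auto)
    finally have t1: "measure \<nu> ((\<lambda>y. q + y/2) -` Dy a k \<times> Dy b j) \<le> ?\<beta>^b" .
    have t2: "measure \<nu> (Dy a k \<times> Dy b j) \<le> ?\<beta>^b" using Suc.IH[of a k j] 0 by simp
    have "x/2 * measure \<nu> ((\<lambda>y. q + y/2) -` Dy a k \<times> Dy b j) + (1-x)/2 * measure \<nu> (Dy a k \<times> Dy b j)
        \<le> x/2 * ?\<beta>^b + (1-x)/2 * ?\<beta>^b"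
      using t1 t2 x0 x1 by (intro add_mono mult_left_mono) auto
    also have "\<dots> \<le> ?\<beta>^(Suc b)"
    proof -
      have "x/2 * ?\<beta>^b + (1-x)/2 * ?\<beta>^b = ?\<beta>^b / 2" by (simp add: field_simps)
      also have "\<dots> \<le> ?\<beta>^b * ?\<beta>"
      proof -
        have p: "0 \<le> ?\<beta>^b" using \<beta>0 by simp
        have "?\<beta>^b * (1/2) \<le> ?\<beta>^b * ?\<beta>" using p x0 by (intro mult_left_mono) auto
        then show ?thesis by simp
      qed
      finally show ?thesis by (simp add: mult.commute)
    qed
    finally show ?thesis using 0 by simp
  next
    case (Suc a')
    have pre: "(\<lambda>y. q + y/2) -` Dy (Suc a') k = Dy a' (if q = 0 then k else k - 2^a')"
      using q Dy_h0[of a' k] Dy_h1[of a' k] by auto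
    have t1: "measure \<nu> ((\<lambda>y. q + y/2) -` Dy a k \<times> Dy b j) \<le> (1/2)^a' * ?\<beta>^b"
      using Suc.IH[of a' "if q = 0 then k else k - 2^a'" j] pre Suc by simp
    have t2: "measure \<nu> (Dy a k \<times> Dy b j) \<le> (1/2)^Suc a' * ?\<beta>^b" using Suc.IH[of a k j] Suc by simp
    have "x/2 * measure \<nu> ((\<lambda>y. q + y/2) -` Dy a k \<times> Dy b j) + (1-x)/2 * measure \<nu> (Dy a k \<times> Dy b j)
        \<le> x/2 * ((1/2)^a' * ?\<beta>^b) + (1-x)/2 * ((1/2)^Suc a' * ?\<beta>^b)"
      using t1 t2 x0 x1 by (intro add_mono mult_left_mono) auto
    also have "\<dots> = (1/2)^Suc a' * ?\<beta>^Suc b" by (simp add: field_simps)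
    finally show ?thesis using Suc by simp
  qed
  have Bb: "Dy a k \<times> Dy (Suc b) k' \<in> sets borel" by (intro borel_Times) auto
  have F: "measure \<nu> (Dy a k \<times> Dy (Suc b) k') =
      (x/2 * measure \<nu> ((\<lambda>y. y/2) -` Dy a k \<times> Dy b k') + (1-x)/2 * measure \<nu> (Dy a k \<times> Dy b k'))
    + (x/2 * measure \<nu> ((\<lambda>y. 1 + y/2) -` Dy a k \<times> Dy b (k' - 2^b)) + (1-x)/2 * measure \<nu> (Dy a k \<times> Dy b (k' - 2^b)))"
    using F3[OF Bb] by (simp add: Fmap_T_pre Fmap_F_pre Dy_h0 Dy_h1)
  have hb: "(\<lambda>y. c + y/2) -` Dy a k \<in> sets borel" for c by (rule hpre_borel) simp
  show ?case
  proof (cases "k' < 2^b")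
    case True
    have d: "Dy b (k' - 2^b) \<inter> {0..<2} = {}" using Dy_neg[of "k' - 2^b" b] True by auto
    have "measure \<nu> ((\<lambda>y. 1 + y/2) -` Dy a k \<times> Dy b (k' - 2^b)) = 0"
      by (rule zero2[OF d hb])
    moreover have "measure \<nu> (Dy a k \<times> Dy b (k' - 2^b)) = 0" by (rule zero2[OF d]) simp
    ultimately show ?thesis using F G[of 0 k'] by simp
  next
    case False
    have d: "Dy b k' \<inter> {0..<2} = {}" using Dy_big[of b k'] False by auto
    have "measure \<nu> ((\<lambda>y. y/2) -` Dy a k \<times> Dy b k') = 0"
      using zero2[OF d hb[of 0]] by simp
    moreover have "measure \<nu> (Dy a k \<times> Dy b k') = 0" by (rule zero2[OF d]) simp
    ultimately show ?thesis using F G[of 1 "k' - 2^b"] by simp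
  qed
qed

lemma joint_low: "b \<le> a \<Longrightarrow> (1/2)^a * ((1+x)/2)^b \<le> measure \<nu> ({0..2*(1/2)^a} \<times> {0..2*(1/2)^b})"
proof (induction b arbitrary: a)
  case 0
  let ?A = "{0..2*(1/2::real)^a}"
  have "measure \<nu> (?A \<times> UNIV) \<le> measure \<nu> (?A \<times> {0..2} \<union> ?A \<times> (UNIV - {0..2}))"
    by (rule m_mono) (auto intro!: sets.Un borel_Times)
  also have "\<dots> \<le> measure \<nu> (?A \<times> {0..2}) + measure \<nu> (?A \<times> (UNIV - {0..2}))"
    by (rule m_sub) (auto intro: borel_Times)
  also have "measure \<nu> (?A \<times> (UNIV - {0..2})) = 0"
    by (rule out2) (auto intro: borel_Times)
  finally have "measure \<nu> (?A \<times> UNIV) \<le> measure \<nu> (?A \<times> {0..2})" by simp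
  moreover have "(1/2)^a \<le> measure \<nu> (?A \<times> UNIV)" by (rule half.low[OF half1])
  ultimately show ?case by simp
next
  case (Suc b)
  then obtain a' where a: "a = Suc a'" by (cases a) auto
  let ?\<beta> = "(1+x)/2"
  let ?B = "{0..2*(1/2::real)^a} \<times> {0..2*(1/2::real)^Suc b}"
  have Bb: "?B \<in> sets borel" by (intro borel_Times) auto
  have F: "measure \<nu> ?B =
      (x/2 * measure \<nu> ({0..2*(1/2)^a'} \<times> {0..2*(1/2)^b}) + (1-x)/2 * measure \<nu> ({0..2*(1/2)^a} \<times> {0..2*(1/2)^b}))
    + (x/2 * measure \<nu> (Fmap 1 True -` ?B) + (1-x)/2 * measure \<nu> (Fmap 1 False -` ?B))"
    using F3[OF Bb] a by (simp add: Fmap_T_pre Fmap_F_pre pre_half_Icc pre_half_Icc2)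
  have nn: "0 \<le> x/2 * measure \<nu> (Fmap 1 True -` ?B) + (1-x)/2 * measure \<nu> (Fmap 1 False -` ?B)"
    using x0 x1 by simp
  have i1: "(1/2)^a' * ?\<beta>^b \<le> measure \<nu> ({0..2*(1/2)^a'} \<times> {0..2*(1/2)^b})"
    using Suc.IH[of a'] Suc.prems a by simp
  have i2: "(1/2)^a * ?\<beta>^b \<le> measure \<nu> ({0..2*(1/2)^a} \<times> {0..2*(1/2)^b})"
    using Suc.IH[of a] Suc.prems by simp
  have "(1/2)^a * ?\<beta>^Suc b = x/2 * ((1/2)^a' * ?\<beta>^b) + (1-x)/2 * ((1/2)^a * ?\<beta>^b)"
    using a by (simp add: field_simps)
  also have "\<dots> \<le> x/2 * measure \<nu> ({0..2*(1/2)^a'} \<times> {0..2*(1/2)^b}) + (1-x)/2 * measure \<nu> ({0..2*(1/2)^a} \<times> {0..2*(1/2)^b})"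
    using i1 i2 x0 x1 by (intro add_mono mult_left_mono) auto
  also have "\<dots> \<le> measure \<nu> ?B" using F nn by simp
  finally show ?case .
qed

end

primrec tc :: "nat \<Rightarrow> nat \<Rightarrow> nat \<Rightarrow> nat" where
  "tc i m 0 = 0"
| "tc i m (Suc k) = tc i m k + (if i < Suc k \<and> Suc k \<le> i + m then 1 else 0)"

primrec Pc :: "(nat \<Rightarrow> nat) \<Rightarrow> nat \<Rightarrow> nat \<Rightarrow> nat \<Rightarrow> real" where
  "Pc g i m 0 = 0"
| "Pc g i m (Suc k) = Pc g i m k + (if i < Suc k \<and> Suc k \<le> i + m then real (g (Suc k)) * (1/2)^(tc i m k) else 0)"

primrec Rc :: "(nat \<Rightarrow> nat) \<Rightarrow> nat \<Rightarrow> real" where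
  "Rc g 0 = 0"
| "Rc g (Suc k) = Rc g k + real (g (Suc k)) * (1/2)^k"

lemma tc_closed: "tc i m k = min (k - i) m"
  by (induction k) auto

lemma Pc_closed: "Pc g i m k = (\<Sum>j\<in>{1..tc i m k}. real (g (i + j)) * (1/2)^(j - 1))"
proof (induction k)
  case 0 then show ?case by simp
next
  case (Suc k)
  show ?case
  proof (cases "i < Suc k \<and> Suc k \<le> i + m")
    case True
    then have t: "tc i m k = k - i" "Suc k = i + Suc (tc i m k)" by (auto simp: tc_closed)
    have "Pc g i m (Suc k) = (\<Sum>j\<in>{1..tc i m k}. real (g (i + j)) * (1/2)^(j - 1)) + real (g (Suc k)) * (1/2)^(tc i m k)"
      using Suc True by simp
    also have "\<dots> = (\<Sum>j\<in>{1..Suc (tc i m k)}. real (g (i + j)) * (1/2)^(j - 1))"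
      using t(2) by simp
    finally show ?thesis using True by simp
  next
    case False
    then have "Pc g i m (Suc k) = Pc g i m k" "tc i m (Suc k) = tc i m k" by auto
    then show ?thesis using Suc.IH by simp
  qed
qed

lemma Rc_closed: "Rc g k = (\<Sum>j\<in>{1..k}. real (g j) * (1/2)^(j - 1))"
  by (induction k) auto

lemma powi_half: "k \<ge> 1 \<Longrightarrow> (2::real) powi (- (int k - 1)) = (1/2)^(k - 1)"
proof -
  assume "k \<ge> 1"
  then have "- (int k - 1) = - int (k - 1)" by simp
  then have "(2::real) powi (- (int k - 1)) = inverse (2 ^ (k-1))"
    by (simp only: power_int_minus power_int_of_nat)
  also have "\<dots> = (1/2)^(k-1)" by (simp only: inverse_eq_divide power_one_over)
  finally show ?thesis .
qed

lemma Gmap_borel: "B \<in> sets borel \<Longrightarrow> {p::real\<times>real. (P + c * fst p, R + d * snd p) \<in> B} \<in> sets borel"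
proof -
  assume B: "B \<in> sets borel"
  have "(\<lambda>p::real\<times>real. (P + c * fst p, R + d * snd p)) \<in> borel_measurable borel"
    by (intro borel_measurable_continuous_onI continuous_intros)
  from measurable_sets[OF this B] show ?thesis by (simp add: vimage_def)
qed

context ssm begin

lemma F3_lowT: "q \<in> {0,1} \<Longrightarrow> B \<in> sets borel \<Longrightarrow> x/2 * measure \<nu> (Fmap q True -` B) \<le> measure \<nu> B"
  using F3[of B] x0 x1 by (auto simp: add_nonneg_nonneg)

lemma F3_lowF: "q \<in> {0,1} \<Longrightarrow> B \<in> sets borel \<Longrightarrow> (1-x)/2 * measure \<nu> (Fmap q False -` B) \<le> measure \<nu> B"
  using F3[of B] x0 x1 by (auto simp: add_nonneg_nonneg)

lemma prefix:
  fixes g :: "nat \<Rightarrow> nat" and i m :: nat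
  assumes g: "\<forall>j\<in>{1..n}. g j \<in> {0,1}" and k: "k \<le> n" and B: "B \<in> sets borel"
  shows "min (x/2) ((1-x)/2) ^ k * measure \<nu> {p. (Pc g i m k + (1/2)^(tc i m k) * fst p, Rc g k + (1/2)^k * snd p) \<in> B}
     \<le> measure \<nu> B"
  using k
proof (induction k)
  case 0 then show ?case by simp
next
  case (Suc k)
  let ?c = "min (x/2) ((1-x)/2)"
  have c0: "0 \<le> ?c" using x0 x1 by simp
  let ?B' = "{p. (Pc g i m k + (1/2)^(tc i m k) * fst p, Rc g k + (1/2)^k * snd p) \<in> B}"
  let ?B'' = "{p. (Pc g i m (Suc k) + (1/2)^(tc i m (Suc k)) * fst p, Rc g (Suc k) + (1/2)^(Suc k) * snd p) \<in> B}"
  define q where "q = real (g (Suc k))"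
  have q: "q \<in> {0,1}" using g Suc.prems by (auto simp: q_def)
  define s where "s = (i < Suc k \<and> Suc k \<le> i + m)"
  have B': "?B' \<in> sets borel" by (rule Gmap_borel[OF B])
  have pre: "Fmap q s -` ?B' = ?B''"
    by (auto simp: Fmap_def s_def q_def algebra_simps)
  have step: "?c * measure \<nu> ?B'' \<le> measure \<nu> ?B'"
  proof (cases s)
    case True
    have "?c * measure \<nu> ?B'' \<le> x/2 * measure \<nu> ?B''" by (rule mult_right_mono[OF min.cobounded1]) simp
    also have "\<dots> \<le> measure \<nu> ?B'" using F3_lowT[OF q B'] pre True by simp
    finally show ?thesis .
  next
    case False
    have "?c * measure \<nu> ?B'' \<le> (1-x)/2 * measure \<nu> ?B''" by (rule mult_right_mono[OF min.cobounded2]) simp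
    also have "\<dots> \<le> measure \<nu> ?B'" using F3_lowF[OF q B'] pre False by simp
    finally show ?thesis .
  qed
  have "?c ^ Suc k * measure \<nu> ?B'' = ?c^k * (?c * measure \<nu> ?B'')" by simp
  also have "\<dots> \<le> ?c^k * measure \<nu> ?B'" using step c0 by (intro mult_left_mono) auto
  also have "\<dots> \<le> measure \<nu> B" using Suc by simp
  finally show ?case .
qed

end

lemma cover_int:
  fixes c w :: real assumes w: "0 < w" and y: "y \<in> {c - w..c + w}"
  shows "y \<in> {of_int (\<lfloor>c/w\<rfloor> - 1) * w ..< of_int \<lfloor>c/w\<rfloor> * w} \<union> {of_int \<lfloor>c/w\<rfloor> * w ..< of_int (\<lfloor>c/w\<rfloor> + 1) * w}
      \<union> {of_int (\<lfloor>c/w\<rfloor> + 1) * w ..< of_int (\<lfloor>c/w\<rfloor> + 2) * w}"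
proof -
  define k where "k = \<lfloor>c/w\<rfloor>"
  have a: "of_int k * w \<le> c" using of_int_floor_le[of "c/w"] w by (simp add: k_def le_divide_eq)
  have b: "c < (of_int k + 1) * w"
    using pos_divide_less_eq[OF w, of c "of_int k + 1"] real_of_int_floor_add_one_gt[of "c/w"] by (simp add: k_def)
  have b': "c < of_int k * w + w" using b by (simp add: algebra_simps)
  show ?thesis using y a b' unfolding k_def[symmetric] by (auto simp: algebra_simps)
qed

lemma Dy_alt: "Dy l k = {of_int k * (2*(1/2)^l) ..< of_int (k+1) * (2*(1/2)^l)}"
  by (simp add: Dy_def algebra_simps)

context ssm begin

lemma m_union3_1:
  assumes "A1 \<in> sets borel" "A2 \<in> sets borel" "A3 \<in> sets borel" "K \<in> sets borel"
  shows "measure \<nu> ((A1 \<union> A2 \<union> A3) \<times> K) \<le> measure \<nu> (A1 \<times> K) + measure \<nu> (A2 \<times> K) + measure \<nu> (A3 \<times> K)"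
proof -
  have "measure \<nu> ((A1 \<union> A2 \<union> A3) \<times> K) = measure \<nu> ((A1 \<times> K \<union> A2 \<times> K) \<union> A3 \<times> K)"
    by (simp add: Sigma_Un_distrib1)
  also have "\<dots> \<le> measure \<nu> (A1 \<times> K \<union> A2 \<times> K) + measure \<nu> (A3 \<times> K)"
    using assms by (intro m_sub sets.Un borel_Times) auto
  also have "measure \<nu> (A1 \<times> K \<union> A2 \<times> K) \<le> measure \<nu> (A1 \<times> K) + measure \<nu> (A2 \<times> K)"
    using assms by (intro m_sub borel_Times) auto
  finally show ?thesis by simp
qed

lemma m_union3_2:
  assumes "A1 \<in> sets borel" "A2 \<in> sets borel" "A3 \<in> sets borel" "K \<in> sets borel"
  shows "measure \<nu> (K \<times> (A1 \<union> A2 \<union> A3)) \<le> measure \<nu> (K \<times> A1) + measure \<nu> (K \<times> A2) + measure \<nu> (K \<times> A3)"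
proof -
  have "measure \<nu> (K \<times> (A1 \<union> A2 \<union> A3)) = measure \<nu> ((K \<times> A1 \<union> K \<times> A2) \<union> K \<times> A3)"
    by (simp add: Sigma_Un_distrib2)
  also have "\<dots> \<le> measure \<nu> (K \<times> A1 \<union> K \<times> A2) + measure \<nu> (K \<times> A3)"
    using assms by (intro m_sub sets.Un borel_Times) auto
  also have "measure \<nu> (K \<times> A1 \<union> K \<times> A2) \<le> measure \<nu> (K \<times> A1) + measure \<nu> (K \<times> A2)"
    using assms by (intro m_sub borel_Times) auto
  finally show ?thesis by simp
qed

lemma upper_ball:
  assumes r: "0 < r" "r \<le> 2*(1/2)^l"
  shows "measure \<nu> (cball (z1, z2) r) \<le> 9 * ((1/2)^l * ((1+x)/2)^l)"
proof -
  define w where "w = 2*(1/2::real)^l"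
  have w: "0 < w" by (simp add: w_def)
  define k1 where "k1 = \<lfloor>z1/w\<rfloor>"
  define k2 where "k2 = \<lfloor>z2/w\<rfloor>"
  define U1 where "U1 = Dy l (k1 - 1) \<union> Dy l k1 \<union> Dy l (k1 + 1)"
  define U2 where "U2 = Dy l (k2 - 1) \<union> Dy l k2 \<union> Dy l (k2 + 1)"
  have cov: "y \<in> Dy l (\<lfloor>c/w\<rfloor> - 1) \<union> Dy l \<lfloor>c/w\<rfloor> \<union> Dy l (\<lfloor>c/w\<rfloor> + 1)" if "y \<in> {c - w..c + w}" for y c
    using cover_int[OF w that] unfolding Dy_alt w_def[symmetric] by (simp add: add.assoc)
  have sub: "cball (z1, z2) r \<subseteq> U1 \<times> U2"
  proof
    fix p assume p: "p \<in> cball (z1, z2) r"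
    then have "dist (fst (z1, z2)) (fst p) \<le> r" "dist (snd (z1, z2)) (snd p) \<le> r"
      using dist_fst_le[of "(z1, z2)" p] dist_snd_le[of "(z1, z2)" p] by (auto simp: mem_cball)
    then have "fst p \<in> {z1 - w..z1 + w}" "snd p \<in> {z2 - w..z2 + w}"
      using r unfolding w_def by (auto simp: dist_real_def abs_le_iff)
    then show "p \<in> U1 \<times> U2" using cov unfolding U1_def U2_def k1_def k2_def by (cases p) auto
  qed
  let ?A = "(1/2::real)^l * ((1+x)/2)^l"
  have one: "measure \<nu> (Dy l a \<times> Dy l b) \<le> ?A" for a b by (rule joint_up)
  have row: "measure \<nu> (Dy l a \<times> U2) \<le> 3 * ?A" for a
  proof -
    have "measure \<nu> (Dy l a \<times> U2) \<le> measure \<nu> (Dy l a \<times> Dy l (k2 - 1)) + measure \<nu> (Dy l a \<times> Dy l k2) + measure \<nu> (Dy l a \<times> Dy l (k2 + 1))"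
      unfolding U2_def by (rule m_union3_2) auto
    then show ?thesis using one[of a "k2 - 1"] one[of a k2] one[of a "k2 + 1"] by simp
  qed
  have "measure \<nu> (cball (z1, z2) r) \<le> measure \<nu> (U1 \<times> U2)"
    unfolding U1_def U2_def by (intro m_mono[OF sub[unfolded U1_def U2_def]] borel_Times sets.Un Dy_borel)
  also have "\<dots> \<le> measure \<nu> (Dy l (k1 - 1) \<times> U2) + measure \<nu> (Dy l k1 \<times> U2) + measure \<nu> (Dy l (k1 + 1) \<times> U2)"
    unfolding U1_def by (rule m_union3_1) (simp_all add: U2_def sets.Un)
  also have "\<dots> \<le> 9 * ?A" using row[of "k1 - 1"] row[of k1] row[of "k1 + 1"] by simp
  finally show ?thesis .
qed

lemma lower_ball:
  assumes g: "\<forall>j\<in>{1..n}. g j \<in> {0,1}" and r: "0 < r" and l: "2*(1/2)^l \<le> r/4"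
  shows "min (x/2) ((1-x)/2)^n * ((1/2)^l * ((1+x)/2)^l) \<le> measure \<nu> (cball (Pc g i m n, Rc g n) r)"
proof -
  let ?c = "min (x/2) ((1-x)/2)"
  have c0: "0 \<le> ?c" using x0 x1 by simp
  let ?P = "Pc g i m n" and ?R = "Rc g n" and ?t = "tc i m n"
  let ?B = "cball (?P, ?R) r"
  have B: "?B \<in> sets borel" by (rule borel_closed) simp
  let ?G = "{p. (?P + (1/2)^?t * fst p, ?R + (1/2)^n * snd p) \<in> ?B}"
  have pre: "?c^n * measure \<nu> ?G \<le> measure \<nu> ?B" by (rule prefix[OF g le_refl B])
  have sub: "{0..2*(1/2)^l} \<times> {0..2*(1/2)^l} \<subseteq> ?G"
  proof
    fix p assume p: "p \<in> {0..2*(1/2::real)^l} \<times> {0..2*(1/2::real)^l}"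
    obtain a b where ab: "p = (a, b)" by (cases p)
    have a: "0 \<le> a" "a \<le> r/4" and b: "0 \<le> b" "b \<le> r/4" using p l ab by auto
    have ha: "(1/2::real)^?t * a \<le> a" using a(1) by (intro mult_left_le_one_le) (auto simp: power_le_one)
    have hb: "(1/2::real)^n * b \<le> b" using b(1) by (intro mult_left_le_one_le) (auto simp: power_le_one)
    have "dist (?P, ?R) (?P + (1/2)^?t * a, ?R + (1/2)^n * b)
        = sqrt ((dist ?P (?P + (1/2)^?t * a))\<^sup>2 + (dist ?R (?R + (1/2)^n * b))\<^sup>2)"
      by (rule dist_Pair_Pair)
    also have "\<dots> \<le> \<bar>dist ?P (?P + (1/2)^?t * a)\<bar> + \<bar>dist ?R (?R + (1/2)^n * b)\<bar>"
      by (rule sqrt_sum_squares_le_sum_abs)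
    also have "\<dots> = (1/2)^?t * a + (1/2)^n * b" using a(1) b(1) by (simp add: dist_real_def)
    also have "\<dots> \<le> r" using ha hb a b by simp
    finally show "p \<in> ?G" using ab by (simp add: mem_cball)
  qed
  have Gb: "?G \<in> sets borel" by (rule Gmap_borel[OF B])
  have "(1/2)^l * ((1+x)/2)^l \<le> measure \<nu> ({0..2*(1/2)^l} \<times> {0..2*(1/2)^l})" by (rule joint_low) simp
  also have "\<dots> \<le> measure \<nu> ?G" by (rule m_mono[OF sub Gb])
  finally have "?c^n * ((1/2)^l * ((1+x)/2)^l) \<le> ?c^n * measure \<nu> ?G"
    using c0 by (intro mult_left_mono) auto
  then show ?thesis using pre by simp
qed

end

lemma limit_from_bounds:
  fixes f :: "real \<Rightarrow> real" and \<alpha> Ka Kb :: real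
  assumes b: "\<And>r. 0 < r \<Longrightarrow> r < 1 \<Longrightarrow> Ka + \<alpha> * ln r \<le> ln (f r) \<and> ln (f r) \<le> Kb + \<alpha> * ln r"
  shows "((\<lambda>r. ln (f r) / ln r) \<longlongrightarrow> \<alpha>) (at_right 0)"
proof -
  have lninf: "filterlim ln at_infinity (at_right (0::real))"
    by (rule filterlim_mono[OF ln_at_0]) (auto simp: at_infinity_eq_at_top_bot)
  have l: "((\<lambda>r. \<alpha> + K / ln r) \<longlongrightarrow> \<alpha>) (at_right 0)" for K
    using tendsto_add[OF tendsto_const[of \<alpha>] tendsto_divide_0[OF tendsto_const[of K] lninf]] by simp
  have ev: "eventually (\<lambda>r. 0 < r \<and> r < 1) (at_right (0::real))"
    by (simp add: eventually_at_right_field) (auto intro: exI[of _ 1])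
  show ?thesis
  proof (rule tendsto_sandwich[OF _ _ l[of Kb] l[of Ka]])
    show "eventually (\<lambda>r. \<alpha> + Kb / ln r \<le> ln (f r) / ln r) (at_right 0)"
      using ev
    proof eventually_elim
      case (elim r)
      then have lr: "ln r < 0" by simp
      have "ln (f r) \<le> Kb + \<alpha> * ln r" using b elim by auto
      then have "(Kb + \<alpha> * ln r) / ln r \<le> ln (f r) / ln r"
        using lr by (intro divide_right_mono_neg) auto
      also have "(Kb + \<alpha> * ln r) / ln r = \<alpha> + Kb / ln r" using lr by (simp add: field_simps)
      finally show ?case .
    qed
    show "eventually (\<lambda>r. ln (f r) / ln r \<le> \<alpha> + Ka / ln r) (at_right 0)"
      using ev
    proof eventually_elim
      case (elim r)
      then have lr: "ln r < 0" by simp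
      have "Ka + \<alpha> * ln r \<le> ln (f r)" using b elim by auto
      then have "ln (f r) / ln r \<le> (Ka + \<alpha> * ln r) / ln r"
        using lr by (intro divide_right_mono_neg) auto
      also have "(Ka + \<alpha> * ln r) / ln r = \<alpha> + Ka / ln r" using lr by (simp add: field_simps)
      finally show ?case .
    qed
  qed
qed


lemma ln_half_pow: "ln ((1/2::real)^l) = - real l * ln 2"
proof -
  have "(1/2::real)^l = inverse (2^l)" by (simp add: power_one_over inverse_eq_divide)
  then show ?thesis by (simp add: ln_inverse ln_realpow)
qed

context ssm begin

lemma ssm_final:
  assumes g: "\<forall>j\<in>{1..n}. g j \<in> {0,1}"
  shows "((\<lambda>r. ln (measure \<nu> (cball (Pc g i m n, Rc g n) r)) / ln r) \<longlongrightarrow> 2 - ln (1+x)/ln 2) (at_right 0)"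
proof -
  define c where "c = min (x/2) ((1-x)/2)"
  define A where "A = (1+x)/4"
  have c0: "0 < c" using x0 x1 by (simp add: c_def)
  have A0: "0 < A" "A < 1" using x0 x1 by (auto simp: A_def)
  have lnA: "ln A < 0" using A0 by simp
  have hA: "(1/2)^l * ((1+x)/2)^l = A^l" for l
    by (simp add: A_def power_mult_distrib[symmetric])
  have ln2: "0 < ln (2::real)" by simp
  have alpha: "(2 - ln (1+x)/ln 2) = - ln A / ln 2"
  proof -
    have "ln A = ln (1+x) - ln 4" using x0 by (simp add: A_def ln_div)
    moreover have "ln (4::real) = 2 * ln 2" using ln_realpow[of 2 2] by simp
    ultimately have h: "ln (1+x) = ln A + 2 * ln 2" by simp
    show ?thesis unfolding h using ln2 by (simp add: field_simps)
  qed
  show ?thesis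
  proof (rule limit_from_bounds[where Ka = "real n * ln c + 4 * ln A" and Kb = "ln 9 - ln A"])
    fix r :: real assume r: "0 < r" "r < 1"
    let ?f = "measure \<nu> (cball (Pc g i m n, Rc g n) r)"
    define L where "L = - ln r / ln 2"
    have lnr: "ln r = - L * ln 2" using ln2 by (simp add: L_def)
    have "ln r < 0" using r by simp
    then have L0: "0 < L" using ln2 by (simp add: L_def divide_neg_pos)
    define l1 where "l1 = nat \<lfloor>L\<rfloor>"
    have l1a: "real l1 \<le> L" using L0 by (simp add: l1_def)
    have l1b: "L < real l1 + 1" using L0 by (simp add: l1_def)
    define l2 where "l2 = l1 + 4"
    have up1: "r \<le> 2*(1/2)^l1"
    proof -
      have "ln r \<le> ln ((1/2::real)^l1)" using l1a ln2 by (simp add: lnr ln_half_pow mult_right_mono)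
      then have "r \<le> (1/2)^l1" using r by simp
      moreover have "0 \<le> (1/2::real)^l1" by simp
      ultimately show ?thesis by linarith
    qed
    have lo2: "2*(1/2)^l2 \<le> r/4"
    proof -
      have "ln ((1/2::real)^l2) \<le> ln (r/8)"
      proof -
        have "ln (8::real) = 3 * ln 2" using ln_realpow[of 2 3] by simp
        then have e: "ln (r/8) = ln r - 3 * ln 2" using r by (simp add: ln_div)
        have "L + 3 \<le> real l2" using l1b by (simp add: l2_def)
        then have "(L + 3) * ln 2 \<le> real l2 * ln 2" using ln2 by (intro mult_right_mono) auto
        then show ?thesis by (simp add: ln_half_pow e lnr algebra_simps)
      qed
      then have "(1/2::real)^l2 \<le> r/8" using r by simp
      then show ?thesis by linarith
    qed
    have U: "?f \<le> 9 * A^l1" using upper_ball[OF r(1) up1] hA by simp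
    have Lw: "c^n * A^l2 \<le> ?f" using lower_ball[OF g r(1) lo2, of i m] hA by (simp add: c_def)
    have pos: "0 < c^n * A^l2" using c0 A0 by simp
    have lnU: "ln ?f \<le> ln 9 + real l1 * ln A"
    proof -
      have "ln ?f \<le> ln (9 * A^l1)" using U pos Lw by simp
      also have "\<dots> = ln 9 + real l1 * ln A" using A0 by (simp add: ln_mult ln_realpow)
      finally show ?thesis .
    qed
    have lnL: "real n * ln c + real l2 * ln A \<le> ln ?f"
    proof -
      have "ln (c^n * A^l2) \<le> ln ?f" using Lw pos by simp
      moreover have "ln (c^n * A^l2) = real n * ln c + real l2 * ln A" using A0 c0 by (simp add: ln_mult ln_realpow)
      ultimately show ?thesis by simp
    qed
    have a1: "real l1 * ln A \<le> (L - 1) * ln A" using l1b lnA by (intro mult_right_mono_neg) auto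
    have a2: "(L + 4) * ln A \<le> real l2 * ln A" using l1a lnA by (intro mult_right_mono_neg) (auto simp: l2_def)
    have key: "L * ln A = (2 - ln (1+x)/ln 2) * ln r" unfolding alpha lnr using ln2 by (simp add: field_simps)
    show "real n * ln c + 4 * ln A + (2 - ln (1+x)/ln 2) * ln r \<le> ln ?f \<and> ln ?f \<le> ln 9 - ln A + (2 - ln (1+x)/ln 2) * ln r"
      using lnU lnL a1 a2 key by (simp add: algebra_simps)
  qed
qed

end

theorem theorem7p1:
  fixes M :: "'w measure" and Q U :: "nat \<Rightarrow> 'w \<Rightarrow> real" and x :: real
    and \<gamma> \<gamma>' :: "nat \<Rightarrow> nat" and m n :: nat and z1 z2 :: real
  assumes "prob_space M"
    and "\<And>k. k \<ge> 1 \<Longrightarrow> Q k \<in> borel_measurable M"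
    and "\<And>k. k \<ge> 1 \<Longrightarrow> U k \<in> borel_measurable M"
    and "prob_space.indep_vars M (\<lambda>_. borel)
           (\<lambda>i. case i of Inl k \<Rightarrow> Q k | Inr k \<Rightarrow> U k)
           (Inl ` {1..} \<union> Inr ` {1..})"
    and "\<And>k. k \<ge> 1 \<Longrightarrow> measure M {\<omega> \<in> space M. Q k \<omega> = 0} = 1/2"
    and "\<And>k. k \<ge> 1 \<Longrightarrow> measure M {\<omega> \<in> space M. Q k \<omega> = 1} = 1/2"
    and "\<And>k. k \<ge> 1 \<Longrightarrow> distributed M lborel (U k) (\<lambda>t. indicator {0..1} t)"
    and "0 < x" and "x < 1"
    and "m \<ge> 1" and "n \<ge> 1"
    and "\<forall>k\<in>{1..m}. \<gamma> k \<in> {0, 1}" and "\<forall>k\<in>{1..n}. \<gamma>' k \<in> {0, 1}"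
    and "z1 = (\<Sum>k=1..m. real (\<gamma> k) * 2 powi (- (int k - 1)))"
    and "z2 = (\<Sum>k=1..n. real (\<gamma>' k) * 2 powi (- (int k - 1)))"
    and "\<exists>i. i + m \<le> n \<and> (\<forall>k\<in>{1..m}. \<gamma> k = \<gamma>' (i + k))"
  shows "((\<lambda>r. ln (measure (mu M Q U x) (cball (z1, z2) r)) / ln r)
           \<longlongrightarrow> 2 - ln (1 + x) / ln 2) (at_right 0)"
proof -
  note A = assms
  have xf: "Xf Q U = (\<lambda>i. case i of Inl k \<Rightarrow> Q k | Inr k \<Rightarrow> U k)" by (simp add: fun_eq_iff Xf_def)
  interpret P: proc M Q U
    unfolding proc_def proc_axioms_def
    using A(1-7) by (simp add: xf Iset_def)
  interpret S: ssm "mu M Q U x" x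
    unfolding ssm_def ssm_axioms_def
    using P.mu_prob_space P.mu_sets P.mu_support P.selfsim A(8,9) by simp
  obtain i where i: "i + m \<le> n" "\<forall>k\<in>{1..m}. \<gamma> k = \<gamma>' (i + k)" using A(16) by blast
  have z2: "z2 = Rc \<gamma>' n"
    unfolding A(15) Rc_closed
  proof (rule sum.cong[OF refl])
    fix k assume k: "k \<in> {1..n}"
    then have "(2::real) powi (- (int k - 1)) = (1/2)^(k - 1)" by (intro powi_half) auto
    then show "real (\<gamma>' k) * 2 powi (- (int k - 1)) = real (\<gamma>' k) * (1/2)^(k - 1)" by simp
  qed
  have tcn: "tc i m n = m" using i(1) by (simp add: tc_closed)
  have z1: "z1 = Pc \<gamma>' i m n"
    unfolding A(14) Pc_closed tcn
  proof (rule sum.cong[OF refl])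
    fix k assume k: "k \<in> {1..m}"
    then have "(2::real) powi (- (int k - 1)) = (1/2)^(k - 1)" by (intro powi_half) auto
    moreover have "\<gamma> k = \<gamma>' (i + k)" using i(2) k by auto
    ultimately show "real (\<gamma> k) * 2 powi (- (int k - 1)) = real (\<gamma>' (i + k)) * (1/2)^(k - 1)" by simp
  qed
  show ?thesis unfolding z1 z2 by (rule S.ssm_final[OF A(13)])
qed


end
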